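(* Let $(\mathcal S,\gamma)$ be an IFS arc with similarity dimension $s$. Then $\gamma$ is a quasiarc if and only if the Hutchinson parameterization $\phi:[0,1]\to\gamma$ is $\frac1s$-bi-Hölder continuous, i.e. there is $K\ge1$ with $K^{-1}|u-v|^{1/s}\le |\phi(u)-\phi(v)|\le K|u-v|^{1/s}$ for all $u,v\in[0,1]$.
   Context: Let $\mathcal S=\{S_1,\dots,S_N\}$, $N\ge2$, be contracting similarities of $\mathbb{R}^n$ with ratios $r_i\in(0,1)$, and $\gamma$ its invariant set (unique nonempty compact set with $\gamma=\bigcup_i S_i(\gamma)$). $(\mathcal S,\gamma)$ is an IFS path if there are $a,b\in\mathbb{R}^n$ with $S_1(a)=a$, $S_N(b)=b$, $S_i(b)=S_{i+1}(a)$ for $i=1,\dots,N-1$. It is an IFS arc if moreover $S_i(\gamma)\cap S_{i+1}(\gamma)=\{S_{i+1}(a)\}$ for $i=1,\dots,N-1$ and $S_i(\gamma)\cap S_j(\gamma)=\emptyset$ for $i,j\in\{1,\dots,N\}$, $|i-j|>1$. The similarity dimension is the unique $s>0$ with $\sum_i r_i^s=1$. Hutchinson parameterization: set $t_0=0$ and $t_i=t_{i-1}+r_i^s$ (so $t_N=1$), $s_i(t)=t\,t_i+(1-t)t_{i-1}$; for a finite word $\sigma=(\sigma_1,\dots,\sigma_k)$ write $S_\sigma=S_{\sigma_1}\circ\cdots\circ S_{\sigma_k}$, $s_\sigma$ likewise. Let $\phi_0(t)=a+t(b-a)$ and $\phi_k(t)=S_\sigma\circ\phi_0\circ s_\sigma^{-1}(t)$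 for $t\in s_\sigma([0,1])$, $\sigma\in\{1,\dots,N\}^k$. The maps $\phi_k$ converge uniformly to a continuous surjection $\phi:[0,1]\to\gamma$, the Hutchinson parameterization. A quasiarc is a metric space quasisymmetrically equivalent to $[0,1]$ ($\gamma$ with the Euclidean metric). *)

theory Defs
  imports "HOL-Analysis.Analysis"
begin

definition similarity_with_ratio :: "('a::euclidean_space \<Rightarrow> 'a) \<Rightarrow> real \<Rightarrow> bool" where
  "similarity_with_ratio f c \<longleftrightarrow> (\<forall>x y. dist (f x) (f y) = c * dist x y)"

definition contracting_ifs :: "nat \<Rightarrow> (nat \<Rightarrow> 'a::euclidean_space \<Rightarrow> 'a) \<Rightarrow> (nat \<Rightarrow> real) \<Rightarrow> bool" where
  "contracting_ifs N S r \<longleftrightarrow> N \<ge> 2 \<and>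
     (\<forall>i\<in>{1..N}. 0 < r i \<and> r i < 1 \<and> similarity_with_ratio (S i) (r i))"

definition invariant_set :: "nat \<Rightarrow> (nat \<Rightarrow> 'a::euclidean_space \<Rightarrow> 'a) \<Rightarrow> 'a set \<Rightarrow> bool" where
  "invariant_set N S \<gamma> \<longleftrightarrow> compact \<gamma> \<and> \<gamma> \<noteq> {} \<and> \<gamma> = (\<Union>i\<in>{1..N}. S i ` \<gamma>)"

definition ifs_path :: "nat \<Rightarrow> (nat \<Rightarrow> 'a::euclidean_space \<Rightarrow> 'a) \<Rightarrow> 'a \<Rightarrow> 'a \<Rightarrow> bool" where
  "ifs_path N S a b \<longleftrightarrow> S 1 a = a \<and> S N b = b \<and> (\<forall>i\<in>{1..N-1}. S i b = S (Suc i) a)"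

definition ifs_arc :: "nat \<Rightarrow> (nat \<Rightarrow> 'a::euclidean_space \<Rightarrow> 'a) \<Rightarrow> 'a set \<Rightarrow> 'a \<Rightarrow> 'a \<Rightarrow> bool" where
  "ifs_arc N S \<gamma> a b \<longleftrightarrow> ifs_path N S a b \<and>
     (\<forall>i\<in>{1..N-1}. S i ` \<gamma> \<inter> S (Suc i) ` \<gamma> = {S (Suc i) a}) \<and>
     (\<forall>i\<in>{1..N}. \<forall>j\<in>{1..N}. \<bar>int i - int j\<bar> > 1 \<longrightarrow> S i ` \<gamma> \<inter> S j ` \<gamma> = {})"

definition similarity_dimension :: "nat \<Rightarrow> (nat \<Rightarrow> real) \<Rightarrow> real \<Rightarrow> bool" where
  "similarity_dimension N r s \<longleftrightarrow> s > 0 \<and> (\<Sum>i=1..N. r i powr s) = 1"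

definition hutch_t :: "(nat \<Rightarrow> real) \<Rightarrow> real \<Rightarrow> nat \<Rightarrow> real" where
  "hutch_t r s i = (\<Sum>j=1..i. r j powr s)"

definition hutch_s :: "(nat \<Rightarrow> real) \<Rightarrow> real \<Rightarrow> nat \<Rightarrow> real \<Rightarrow> real" where
  "hutch_s r s i t = t * hutch_t r s i + (1 - t) * hutch_t r s (i - 1)"

definition word_comp :: "(nat \<Rightarrow> 'b \<Rightarrow> 'b) \<Rightarrow> nat list \<Rightarrow> 'b \<Rightarrow> 'b" where
  "word_comp F \<sigma> = foldr (\<lambda>i g. F i \<circ> g) \<sigma> id"

definition words :: "nat \<Rightarrow> nat \<Rightarrow> nat list set" where
  "words N k = {\<sigma>. length \<sigma> = k \<and> set \<sigma> \<subseteq> {1..N}}"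

definition hutch_phi0 :: "'a::euclidean_space \<Rightarrow> 'a \<Rightarrow> real \<Rightarrow> 'a" where
  "hutch_phi0 a b t = a + t *\<^sub>R (b - a)"

definition hutch_phik ::
  "nat \<Rightarrow> (nat \<Rightarrow> 'a::euclidean_space \<Rightarrow> 'a) \<Rightarrow> (nat \<Rightarrow> real) \<Rightarrow> real \<Rightarrow> 'a \<Rightarrow> 'a \<Rightarrow> nat \<Rightarrow> real \<Rightarrow> 'a" where
  "hutch_phik N S r s a b k t =
     (let \<sigma> = (SOME \<sigma>. \<sigma> \<in> words N k \<and> t \<in> word_comp (hutch_s r s) \<sigma> ` {0..1}) in
        word_comp S \<sigma> (hutch_phi0 a b (inv_into {0..1} (word_comp (hutch_s r s) \<sigma>) t)))"

definition hutchinson_parameterization ::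
  "nat \<Rightarrow> (nat \<Rightarrow> 'a::euclidean_space \<Rightarrow> 'a) \<Rightarrow> (nat \<Rightarrow> real) \<Rightarrow> real \<Rightarrow> 'a \<Rightarrow> 'a \<Rightarrow> (real \<Rightarrow> 'a) \<Rightarrow> bool" where
  "hutchinson_parameterization N S r s a b \<phi> \<longleftrightarrow>
     uniform_limit {0..1} (hutch_phik N S r s a b) \<phi> sequentially"

definition quasisymmetric_on :: "'b::metric_space set \<Rightarrow> ('b \<Rightarrow> 'c::metric_space) \<Rightarrow> bool" where
  "quasisymmetric_on A f \<longleftrightarrow> continuous_on A f \<and> inj_on f A \<and>
     (\<exists>\<eta>::real \<Rightarrow> real. continuous_on {0..} \<eta> \<and> strict_mono_on {0..} \<eta> \<and> \<eta> 0 = 0 \<and>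
        \<eta> ` {0..} = {0..} \<and>
        (\<forall>x\<in>A. \<forall>y\<in>A. \<forall>z\<in>A. \<forall>t\<ge>0. dist x z \<le> t * dist y z \<longrightarrow>
            dist (f x) (f z) \<le> \<eta> t * dist (f y) (f z)))"

definition quasiarc :: "'a::metric_space set \<Rightarrow> bool" where
  "quasiarc \<gamma> \<longleftrightarrow> (\<exists>f::real \<Rightarrow> 'a. quasisymmetric_on {0..1} f \<and> f ` {0..1} = \<gamma>)"

end

theory Submission
  imports Defs
begin


locale hifs =
  fixes S :: "nat \<Rightarrow> 'a::euclidean_space \<Rightarrow> 'a" and r :: "nat \<Rightarrow> real"
    and N :: nat and \<gamma> :: "'a set" and a b :: 'a and s :: real and \<phi> :: "real \<Rightarrow> 'a"
  assumes ci: "contracting_ifs N S r"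
    and inv: "invariant_set N S \<gamma>"
    and arc: "ifs_arc N S \<gamma> a b"
    and sd: "similarity_dimension N r s"
    and hp: "hutchinson_parameterization N S r s a b \<phi>"
begin

abbreviation "lam i \<equiv> r i powr s"
abbreviation "tt \<equiv> hutch_t r s"
abbreviation "sm \<equiv> hutch_s r s"

lemma N2: "N \<ge> 2" using ci unfolding contracting_ifs_def by auto
lemma r_pos: "i \<in> {1..N} \<Longrightarrow> 0 < r i" using ci unfolding contracting_ifs_def by auto
lemma r_lt1: "i \<in> {1..N} \<Longrightarrow> r i < 1" using ci unfolding contracting_ifs_def by auto
lemma S_sim: "i \<in> {1..N} \<Longrightarrow> dist (S i x) (S i y) = r i * dist x y"
  using ci unfolding contracting_ifs_def similarity_with_ratio_def by auto
lemma s_pos: "s > 0" using sd unfolding similarity_dimension_def by auto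
lemma lam_pos: "i \<in> {1..N} \<Longrightarrow> 0 < lam i" using r_pos[of i] by simp
lemma lam_lt1: "i \<in> {1..N} \<Longrightarrow> lam i < 1"
  using r_pos[of i] r_lt1[of i] s_pos powr_less_mono2[of s "r i" 1] by simp
lemma lam_root: "i \<in> {1..N} \<Longrightarrow> lam i powr (1/s) = r i"
  using r_pos[of i] s_pos by (simp add: powr_powr)

lemma tt0: "tt 0 = 0" by (simp add: hutch_t_def)
lemma ttSuc: "tt (Suc i) = tt i + lam (Suc i)" by (simp add: hutch_t_def)
lemma ttN: "tt N = 1" using sd by (simp add: hutch_t_def similarity_dimension_def)
lemma tt_mono: "i \<le> j \<Longrightarrow> tt i \<le> tt j"
  by (induction j rule: dec_induct) (auto simp: ttSuc intro: order_trans)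
lemma tt_strict: "i < j \<Longrightarrow> j \<le> N \<Longrightarrow> tt i < tt j"
proof -
  assume a: "i < j" "j \<le> N"
  have "Suc i \<le> j \<Longrightarrow> j \<le> N \<Longrightarrow> tt i < tt j" for j
  proof (induction j rule: dec_induct)
    case base then show ?case using lam_pos[of "Suc i"] by (simp add: ttSuc)
  next
    case (step n) then show ?case using powr_ge_zero[of "r (Suc n)" s] ttSuc[of n] by linarith
  qed
  then show ?thesis using a by simp
qed
lemma tt_ge0: "tt i \<ge> 0" using tt_mono[of 0 i] tt0 by simp
lemma tt_le1: "i \<le> N \<Longrightarrow> tt i \<le> 1" using tt_mono ttN by metis
lemma tt_prev: "i \<ge> 1 \<Longrightarrow> tt i = tt (i - 1) + lam i"
  by (cases i) (auto simp: ttSuc)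
lemma sm_eq: "i \<ge> 1 \<Longrightarrow> sm i x = tt (i - 1) + lam i * x"
  unfolding hutch_s_def using tt_prev[of i] by (simp add: algebra_simps)

lemma sm_range: "i \<in> {1..N} \<Longrightarrow> x \<in> {0..1} \<Longrightarrow> sm i x \<in> {tt (i-1)..tt i}"
  using sm_eq[of i x] tt_prev[of i] lam_pos[of i]
  by (auto simp: mult_le_cancel_left1 intro: mult_left_le)
lemma sm_range01: "i \<in> {1..N} \<Longrightarrow> x \<in> {0..1} \<Longrightarrow> sm i x \<in> {0..1}"
  using sm_range[of i x] tt_ge0[of "i-1"] tt_le1[of i] by auto
lemma sm_inj: "i \<in> {1..N} \<Longrightarrow> sm i x = sm i y \<Longrightarrow> x = y"
  using sm_eq[of i] lam_pos[of i] by auto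
lemma sm_onto: "i \<in> {1..N} \<Longrightarrow> t \<in> {tt (i-1)..tt i} \<Longrightarrow> \<exists>x\<in>{0..1}. sm i x = t"
proof -
  assume i: "i \<in> {1..N}" and t: "t \<in> {tt (i-1)..tt i}"
  define x where "x = (t - tt (i-1)) / lam i"
  have lp: "lam i > 0" using lam_pos i by auto
  have "sm i x = t" using sm_eq[of i x] i lp by (auto simp: x_def)
  moreover have "x \<in> {0..1}" using t tt_prev[of i] i lp by (auto simp: x_def field_simps)
  ultimately show ?thesis by blast
qed

lemma cover1: "t \<in> {0..1} \<Longrightarrow> \<exists>i\<in>{1..N}. t \<in> {tt (i-1)..tt i}"
proof -
  assume t: "t \<in> {0..1}"
  have "1 \<le> n \<Longrightarrow> t \<le> tt n \<Longrightarrow> \<exists>i\<in>{1..n}. t \<in> {tt (i-1)..tt i}" for n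
  proof (induction n rule: dec_induct)
    case base then show ?case using t tt0 by auto
  next
    case (step n)
    show ?case
    proof (cases "t \<le> tt n")
      case True then show ?thesis using step by force
    next
      case False then show ?thesis using step by (intro bexI[of _ "Suc n"]) auto
    qed
  qed
  from this[of N] show ?thesis using N2 t ttN by auto
qed

lemma cover1': "t \<in> {0..1} \<Longrightarrow> \<exists>i\<in>{1..N}. \<exists>x\<in>{0..1}. t = sm i x"
  using cover1 sm_onto by metis

lemma path_a: "S 1 a = a" and path_b: "S N b = b"
  and path_mid: "i \<in> {1..N-1} \<Longrightarrow> S i b = S (Suc i) a"
  using arc unfolding ifs_arc_def ifs_path_def by auto

abbreviation "sw \<equiv> word_comp sm"
abbreviation "Sw \<equiv> word_comp S"

lemma wc_Nil[simp]: "word_comp F [] = id" by (simp add: word_comp_def)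
lemma wc_Cons[simp]: "word_comp F (i # \<sigma>) = F i \<circ> word_comp F \<sigma>" by (simp add: word_comp_def)

lemma words_Suc: "\<sigma> \<in> words N (Suc k) \<longleftrightarrow> (\<exists>i \<sigma>'. \<sigma> = i # \<sigma>' \<and> i \<in> {1..N} \<and> \<sigma>' \<in> words N k)"
  by (cases \<sigma>) (auto simp: words_def)

lemma sw_range: "set \<sigma> \<subseteq> {1..N} \<Longrightarrow> x \<in> {0..1} \<Longrightarrow> sw \<sigma> x \<in> {0..1}"
  by (induction \<sigma>) (auto simp: sm_range01 simp del: atLeastAtMost_iff)

lemma sw_inj: "set \<sigma> \<subseteq> {1..N} \<Longrightarrow> sw \<sigma> x = sw \<sigma> y \<Longrightarrow> x = y"
proof (induction \<sigma>)
  case (Cons i \<sigma>)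
  then have "i \<in> {1..N}" by auto
  then show ?case using Cons sm_inj[of i "sw \<sigma> x" "sw \<sigma> y"] by auto
qed simp

lemma E1: "set \<sigma> \<subseteq> {1..N} \<Longrightarrow> x \<in> {0..1} \<Longrightarrow> sw \<sigma> x = 1 \<Longrightarrow> Sw \<sigma> (hutch_phi0 a b x) = b"
proof (induction \<sigma>)
  case Nil then show ?case by (simp add: hutch_phi0_def)
next
  case (Cons i \<sigma>)
  let ?z = "sw \<sigma> x"
  have i: "i \<in> {1..N}" and z: "?z \<in> {0..1}" using Cons sw_range by auto
  have eq: "sm i ?z = 1" using Cons by simp
  have iN: "i = N"
  proof (rule ccontr)
    assume "i \<noteq> N" then have "i < N" using i by auto
    then have "tt i < 1" using tt_strict[of i N] ttN by auto
    then show False using sm_range[OF i z] eq by auto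
  qed
  have lp: "lam N > 0" using lam_pos[of N] N2 by auto
  have "sm N ?z = tt (N-1) + lam N * ?z" "tt N = tt (N-1) + lam N" using sm_eq[of N ?z] tt_prev[of N] N2 by auto
  then have "lam N * ?z = lam N * 1" using eq[unfolded iN] ttN by linarith
  then have "?z = 1" using lp by (metis mult_cancel_left less_irrefl)
  then have "Sw \<sigma> (hutch_phi0 a b x) = b" using Cons by auto
  then show ?case using iN path_b by simp
qed

lemma E0: "set \<sigma> \<subseteq> {1..N} \<Longrightarrow> x \<in> {0..1} \<Longrightarrow> sw \<sigma> x = 0 \<Longrightarrow> Sw \<sigma> (hutch_phi0 a b x) = a"
proof (induction \<sigma>)
  case Nil then show ?case by (simp add: hutch_phi0_def)
next
  case (Cons i \<sigma>)
  let ?z = "sw \<sigma> x"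
  have i: "i \<in> {1..N}" and z: "?z \<in> {0..1}" using Cons sw_range by auto
  have eq: "sm i ?z = 0" using Cons by simp
  have i1: "i = 1"
  proof (rule ccontr)
    assume "i \<noteq> 1" then have "1 < i" using i by auto
    then have "tt (i-1) > 0" using tt_strict[of 0 "i-1"] tt0 i by auto
    then show False using sm_range[OF i z] eq by auto
  qed
  have "?z = 0" using eq i1 sm_eq[of 1 ?z] tt0 lam_pos[of 1] N2 by auto
  then have "Sw \<sigma> (hutch_phi0 a b x) = a" using Cons by auto
  then show ?case using i1 path_a by simp
qed

lemma sm_eq_top: "i \<in> {1..N} \<Longrightarrow> sm i X = tt i \<Longrightarrow> X = 1"
proof -
  assume i: "i \<in> {1..N}" and e: "sm i X = tt i"
  have "sm i X = tt (i-1) + lam i * X" "tt i = tt (i-1) + lam i" using sm_eq[of i X] tt_prev[of i] i by auto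
  then have "lam i * X = lam i * 1" using e by linarith
  then show "X = 1" using lam_pos[OF i] by (metis mult_cancel_left less_irrefl)
qed

lemma sm_eq_bot: "i \<in> {1..N} \<Longrightarrow> sm i X = tt (i-1) \<Longrightarrow> X = 0"
proof -
  assume i: "i \<in> {1..N}" and e: "sm i X = tt (i-1)"
  have "sm i X = tt (i-1) + lam i * X" using sm_eq[of i X] i by auto
  then have "lam i * X = 0" using e by linarith
  then show "X = 0" using lam_pos[OF i] by auto
qed

lemma cross: "i \<in> {1..N} \<Longrightarrow> j \<in> {1..N} \<Longrightarrow> i < j \<Longrightarrow> X \<in> {0..1} \<Longrightarrow> Y \<in> {0..1}
   \<Longrightarrow> sm i X = sm j Y \<Longrightarrow> X = 1 \<and> Y = 0 \<and> j = Suc i"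
proof -
  assume i: "i \<in> {1..N}" and j: "j \<in> {1..N}" and ij: "i < j" and X: "X \<in> {0..1}" and Y: "Y \<in> {0..1}"
    and e: "sm i X = sm j Y"
  have 1: "sm i X \<le> tt i" using sm_range[OF i X] by auto
  have 2: "tt (j-1) \<le> sm j Y" using sm_range[OF j Y] by auto
  have 3: "tt i \<le> tt (j-1)" using ij by (intro tt_mono) auto
  have a1: "sm i X = tt i" and a2: "sm j Y = tt (j-1)" and a3: "tt i = tt (j-1)" using 1 2 3 e by auto
  have "j = Suc i"
  proof (rule ccontr)
    assume "j \<noteq> Suc i" then have "i < j - 1" using ij by auto
    moreover have "j - 1 \<le> N" using j by auto
    ultimately show False using tt_strict[of i "j-1"] a3 by auto
  qed
  then show ?thesis using sm_eq_top[OF i a1] sm_eq_bot[OF j a2] by auto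
qed

lemma consistent:
  "set \<sigma> \<subseteq> {1..N} \<Longrightarrow> set \<tau> \<subseteq> {1..N} \<Longrightarrow> length \<sigma> = length \<tau> \<Longrightarrow> x \<in> {0..1} \<Longrightarrow> y \<in> {0..1}
   \<Longrightarrow> sw \<sigma> x = sw \<tau> y \<Longrightarrow> Sw \<sigma> (hutch_phi0 a b x) = Sw \<tau> (hutch_phi0 a b y)"
proof (induction \<sigma> arbitrary: \<tau>)
  case Nil then show ?case by simp
next
  case (Cons i \<sigma> \<tau>0)
  obtain j \<tau> where t0: "\<tau>0 = j # \<tau>" using Cons(4) by (cases \<tau>0) auto
  let ?X = "sw \<sigma> x" and ?Y = "sw \<tau> y"
  have i: "i \<in> {1..N}" and j: "j \<in> {1..N}" and ss: "set \<sigma> \<subseteq> {1..N}" and st: "set \<tau> \<subseteq> {1..N}"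
    and len: "length \<sigma> = length \<tau>" using Cons t0 by auto
  have X: "?X \<in> {0..1}" and Y: "?Y \<in> {0..1}" using sw_range ss st Cons by auto
  have e: "sm i ?X = sm j ?Y" using Cons(7) t0 by simp
  consider "i = j" | "i < j" | "j < i" by linarith
  then show ?case
  proof cases
    case 1
    then have "?X = ?Y" using sm_inj[OF i] e by auto
    then show ?thesis using Cons.IH[OF ss st len Cons(5,6)] t0 1 by simp
  next
    case 2
    from cross[OF i j 2 X Y e] have c: "?X = 1" "?Y = 0" "j = Suc i" by auto
    have "Sw \<sigma> (hutch_phi0 a b x) = b" using E1[OF ss Cons(5) c(1)] .
    moreover have "Sw \<tau> (hutch_phi0 a b y) = a" using E0[OF st Cons(6) c(2)] .
    moreover have "S i b = S j a" using path_mid[of i] c(3) i j by auto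
    ultimately show ?thesis using t0 by simp
  next
    case 3
    from cross[OF j i 3 Y X e[symmetric]] have c: "?Y = 1" "?X = 0" "i = Suc j" by auto
    have "Sw \<tau> (hutch_phi0 a b y) = b" using E1[OF st Cons(6) c(1)] .
    moreover have "Sw \<sigma> (hutch_phi0 a b x) = a" using E0[OF ss Cons(5) c(2)] .
    moreover have "S j b = S i a" using path_mid[of j] c(3) i j by auto
    ultimately show ?thesis using t0 by simp
  qed
qed

lemma cover: "t \<in> {0..1} \<Longrightarrow> \<exists>\<sigma>\<in>words N k. \<exists>x\<in>{0..1}. t = sw \<sigma> x"
proof (induction k arbitrary: t)
  case 0 then show ?case by (auto simp: words_def)
next
  case (Suc k)
  obtain i x where i: "i \<in> {1..N}" and x: "x \<in> {0..1}" and t: "t = sm i x" using cover1'[OF Suc(2)] by blast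
  obtain \<sigma> y where \<sigma>: "\<sigma> \<in> words N k" and y: "y \<in> {0..1}" and xy: "x = sw \<sigma> y" using Suc.IH[OF x] by blast
  have "i # \<sigma> \<in> words N (Suc k)" using i \<sigma> by (simp add: words_Suc)
  moreover have "t = sw (i # \<sigma>) y" using t xy by simp
  ultimately show ?case using y by blast
qed

lemma phik_eq: "\<tau> \<in> words N k \<Longrightarrow> y \<in> {0..1} \<Longrightarrow> hutch_phik N S r s a b k (sw \<tau> y) = Sw \<tau> (hutch_phi0 a b y)"
proof -
  assume \<tau>: "\<tau> \<in> words N k" and y: "y \<in> {0..1}"
  let ?t = "sw \<tau> y"
  let ?P = "\<lambda>\<sigma>. \<sigma> \<in> words N k \<and> ?t \<in> sw \<sigma> ` {0..1}"
  define \<sigma> where "\<sigma> = (SOME \<sigma>. ?P \<sigma>)"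
  have "?P \<tau>" using \<tau> y by auto
  then have P: "?P \<sigma>" unfolding \<sigma>_def by (rule someI)
  then have ss: "set \<sigma> \<subseteq> {1..N}" "length \<sigma> = k" by (auto simp: words_def)
  define x where "x = inv_into {0..1} (sw \<sigma>) ?t"
  have x: "x \<in> {0..1}" "sw \<sigma> x = ?t" using P unfolding x_def
    by (meson inv_into_into, meson f_inv_into_f)
  have "hutch_phik N S r s a b k ?t = Sw \<sigma> (hutch_phi0 a b x)"
    unfolding hutch_phik_def Let_def \<sigma>_def[symmetric] x_def ..
  also have "\<dots> = Sw \<tau> (hutch_phi0 a b y)"
    using consistent[OF ss(1), of \<tau> x y] \<tau> ss(2) x y by (auto simp: words_def)
  finally show ?thesis .
qed

definition "\<rho> = Max (r ` {1..N})"
lemma rho_ge: "i \<in> {1..N} \<Longrightarrow> r i \<le> \<rho>" unfolding \<rho>_def by auto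
lemma rho_lt1: "\<rho> < 1" unfolding \<rho>_def using N2 r_lt1 by (subst Max_less_iff) auto
lemma rho_pos: "\<rho> > 0" using rho_ge[of 1] r_pos[of 1] N2 by auto

lemma gam_compact: "compact \<gamma>" and gam_ne: "\<gamma> \<noteq> {}" and gam_eq: "\<gamma> = (\<Union>i\<in>{1..N}. S i ` \<gamma>)"
  using inv unfolding invariant_set_def by auto
lemma S_gam: "i \<in> {1..N} \<Longrightarrow> x \<in> \<gamma> \<Longrightarrow> S i x \<in> \<gamma>"
  using gam_eq by blast
lemma Sw_gam: "set \<sigma> \<subseteq> {1..N} \<Longrightarrow> x \<in> \<gamma> \<Longrightarrow> Sw \<sigma> x \<in> \<gamma>"
  by (induction \<sigma>) (auto intro: S_gam)
lemma Sw_dist: "set \<sigma> \<subseteq> {1..N} \<Longrightarrow> dist (Sw \<sigma> x) (Sw \<sigma> y) \<le> \<rho> ^ length \<sigma> * dist x y"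
proof (induction \<sigma>)
  case Nil then show ?case by simp
next
  case (Cons i \<sigma>)
  then have i: "i \<in> {1..N}" by auto
  have "dist (Sw (i#\<sigma>) x) (Sw (i#\<sigma>) y) = r i * dist (Sw \<sigma> x) (Sw \<sigma> y)" using S_sim[OF i] by simp
  also have "\<dots> \<le> \<rho> * (\<rho> ^ length \<sigma> * dist x y)"
    using Cons rho_ge[OF i] r_pos[OF i] by (intro mult_mono) auto
  finally show ?case by simp
qed

lemma S_cont_tendsto: "i \<in> {1..N} \<Longrightarrow> (X \<longlongrightarrow> L) F \<Longrightarrow> ((\<lambda>k. S i (X k)) \<longlongrightarrow> S i L) F"
proof -
  assume i: "i \<in> {1..N}" and X: "(X \<longlongrightarrow> L) F"
  have "((\<lambda>k. dist (X k) L) \<longlongrightarrow> 0) F" using X by (rule tendsto_dist_iff[THEN iffD1])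
  then have "((\<lambda>k. r i * dist (X k) L) \<longlongrightarrow> 0) F" by (rule tendsto_mult_right_zero)
  moreover have "dist (S i (X k)) (S i L) = r i * dist (X k) L" for k using S_sim[OF i] .
  ultimately have "((\<lambda>k. dist (S i (X k)) (S i L)) \<longlongrightarrow> 0) F" by simp
  then show ?thesis by (rule tendsto_dist_iff[THEN iffD2])
qed

lemma S_contI: "i \<in> {1..N} \<Longrightarrow> continuous_on A (S i)"
proof -
  assume i: "i \<in> {1..N}"
  have "((\<lambda>y. S i y) \<longlongrightarrow> S i x) (at x within A)" for x
    using S_cont_tendsto[OF i, of "\<lambda>y. y" x] by (simp add: tendsto_ident_at)
  then show ?thesis unfolding continuous_on_def by auto
qed

abbreviation "pk \<equiv> hutch_phik N S r s a b"

lemma phik_Suc: "i \<in> {1..N} \<Longrightarrow> t \<in> {0..1} \<Longrightarrow> pk (Suc k) (sm i t) = S i (pk k t)"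
proof -
  assume i: "i \<in> {1..N}" and t: "t \<in> {0..1}"
  obtain \<tau> y where \<tau>: "\<tau> \<in> words N k" and y: "y \<in> {0..1}" and ty: "t = sw \<tau> y" using cover[OF t] by blast
  have "i # \<tau> \<in> words N (Suc k)" using i \<tau> by (simp add: words_Suc)
  then have "pk (Suc k) (sw (i#\<tau>) y) = Sw (i#\<tau>) (hutch_phi0 a b y)" using phik_eq y by blast
  then show ?thesis using phik_eq[OF \<tau> y] ty by simp
qed

lemma pk_lim: "t \<in> {0..1} \<Longrightarrow> (\<lambda>k. pk k t) \<longlonglongrightarrow> \<phi> t"
  using hp unfolding hutchinson_parameterization_def by (rule tendsto_uniform_limitI)

lemma phi_fun: "i \<in> {1..N} \<Longrightarrow> t \<in> {0..1} \<Longrightarrow> \<phi> (sm i t) = S i (\<phi> t)"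
proof -
  assume i: "i \<in> {1..N}" and t: "t \<in> {0..1}"
  have 1: "(\<lambda>k. pk (Suc k) (sm i t)) \<longlonglongrightarrow> \<phi> (sm i t)"
    using LIMSEQ_Suc[OF pk_lim[OF sm_range01[OF i t]]] .
  have 2: "(\<lambda>k. pk (Suc k) (sm i t)) \<longlonglongrightarrow> S i (\<phi> t)"
    unfolding phik_Suc[OF i t] using S_cont_tendsto[OF i pk_lim[OF t]] .
  show ?thesis using LIMSEQ_unique[OF 1 2] .
qed

lemma phi_in: "t \<in> {0..1} \<Longrightarrow> \<phi> t \<in> \<gamma>"
proof -
  assume t: "t \<in> {0..1}"
  obtain q where q: "q \<in> \<gamma>" using gam_ne by auto
  define M where "M = dist a q + dist a b"
  have bnd: "infdist (pk k t) \<gamma> \<le> \<rho> ^ k * M" for k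
  proof -
    obtain \<sigma> x where \<sigma>: "\<sigma> \<in> words N k" and x: "x \<in> {0..1}" and tx: "t = sw \<sigma> x" using cover[OF t] by blast
    have ss: "set \<sigma> \<subseteq> {1..N}" "length \<sigma> = k" using \<sigma> by (auto simp: words_def)
    have "infdist (pk k t) \<gamma> \<le> dist (Sw \<sigma> (hutch_phi0 a b x)) (Sw \<sigma> q)"
      using phik_eq[OF \<sigma> x] tx Sw_gam[OF ss(1) q] by (auto intro: infdist_le)
    also have "\<dots> \<le> \<rho> ^ k * dist (hutch_phi0 a b x) q" using Sw_dist[OF ss(1)] ss(2) by auto
    also have "dist (hutch_phi0 a b x) q \<le> M"
    proof -
      have "dist (hutch_phi0 a b x) a = x * norm (b - a)" using x by (simp add: hutch_phi0_def dist_norm)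
      also have "\<dots> \<le> dist a b" using x by (simp add: dist_norm norm_minus_commute mult_left_le_one_le)
      finally have "dist (hutch_phi0 a b x) a \<le> dist a b" .
      moreover have "dist (hutch_phi0 a b x) q \<le> dist (hutch_phi0 a b x) a + dist a q" by (rule dist_triangle)
      ultimately show ?thesis unfolding M_def by linarith
    qed
    then have "\<rho> ^ k * dist (hutch_phi0 a b x) q \<le> \<rho> ^ k * M" using rho_pos by (intro mult_left_mono) auto
    finally show ?thesis .
  qed
  have "infdist (\<phi> t) \<gamma> \<le> e" if e: "e > 0" for e
  proof -
    have "eventually (\<lambda>k. dist (pk k t) (\<phi> t) < e/2) sequentially"
      using tendsto_dist_iff[THEN iffD1, OF pk_lim[OF t]] e by (intro order_tendstoD(2)) auto
    moreover have "eventually (\<lambda>k. \<rho> ^ k * M < e/2) sequentially"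
    proof -
      have "(\<lambda>k. \<rho> ^ k * M) \<longlonglongrightarrow> 0 * M"
        using rho_pos rho_lt1 by (intro tendsto_mult LIMSEQ_power_zero) auto
      then show ?thesis using e by (intro order_tendstoD(2)) auto
    qed
    ultimately have "eventually (\<lambda>k. dist (pk k t) (\<phi> t) < e/2 \<and> \<rho> ^ k * M < e/2) sequentially"
      by (rule eventually_conj)
    then obtain N0 where "\<forall>k\<ge>N0. dist (pk k t) (\<phi> t) < e/2 \<and> \<rho> ^ k * M < e/2"
      unfolding eventually_sequentially by blast
    then obtain k where k: "dist (pk k t) (\<phi> t) < e/2" "\<rho> ^ k * M < e/2" by blast
    have "infdist (\<phi> t) \<gamma> \<le> infdist (pk k t) \<gamma> + dist (\<phi> t) (pk k t)" by (rule infdist_triangle)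
    then show ?thesis using bnd[of k] k by (simp add: dist_commute)
  qed
  then have "infdist (\<phi> t) \<gamma> \<le> 0" by (meson dense_ge)
  then have "infdist (\<phi> t) \<gamma> = 0" using infdist_nonneg by (metis antisym)
  then show ?thesis using in_closed_iff_infdist_zero[OF compact_imp_closed[OF gam_compact] gam_ne] by blast
qed

end



context hifs begin

abbreviation "piece i \<equiv> {tt (i-1)..tt i}"

definition "Lm = Max (lam ` {1..N})"
definition "mm = Min (lam ` {1..N})"
lemma Lm_ge: "i \<in> {1..N} \<Longrightarrow> lam i \<le> Lm" unfolding Lm_def by auto
lemma Lm_lt1: "Lm < 1" unfolding Lm_def using N2 lam_lt1 by (subst Max_less_iff) auto
lemma Lm_pos: "Lm > 0"
proof -
  have "1 \<in> {1..N}" using N2 by auto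
  then have "0 < lam 1" "lam 1 \<le> Lm" using Lm_ge lam_pos by blast+
  then show ?thesis by linarith
qed
lemma mm_le: "i \<in> {1..N} \<Longrightarrow> mm \<le> lam i" unfolding mm_def by auto
lemma mm_pos: "mm > 0" unfolding mm_def using N2 lam_pos by (subst Min_gr_iff) auto

lemma powr_scale: "i \<in> {1..N} \<Longrightarrow> x \<ge> 0 \<Longrightarrow> (lam i * x) powr (1/s) = r i * x powr (1/s)"
  using lam_root[of i] by (simp add: powr_mult)

lemma sm_lt: "i \<in> {1..N} \<Longrightarrow> x < y \<Longrightarrow> sm i x < sm i y"
  using sm_eq[of i] lam_pos[of i] by auto

lemma sm_diff: "i \<in> {1..N} \<Longrightarrow> sm i y - sm i x = lam i * (y - x)"
  using sm_eq[of i] by (auto simp: algebra_simps)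

lemma descent:
  assumes scale: "\<And>i u v. i \<in> {1..N} \<Longrightarrow> 0 \<le> u \<Longrightarrow> u < v \<Longrightarrow> v \<le> 1 \<Longrightarrow> Q u v \<Longrightarrow> Q (sm i u) (sm i v)"
    and base: "\<And>u v. 0 \<le> u \<Longrightarrow> u < v \<Longrightarrow> v \<le> 1 \<Longrightarrow> \<not> (\<exists>i\<in>{1..N}. u \<in> piece i \<and> v \<in> piece i) \<Longrightarrow> Q u v"
    and uv: "0 \<le> u" "u < v" "v \<le> 1"
  shows "Q u v"
proof -
  have main: "\<forall>u v. 0 \<le> u \<and> u < v \<and> v \<le> 1 \<and> Lm ^ n \<le> v - u \<longrightarrow> Q u v" for n
  proof (induction n)
    case 0
    show ?case
    proof (intro allI impI)
      fix u v :: real assume h: "0 \<le> u \<and> u < v \<and> v \<le> 1 \<and> Lm ^ 0 \<le> v - u"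
      then have uv: "u = 0" "v = 1" by auto
      have "\<not> (\<exists>i\<in>{1..N}. u \<in> piece i \<and> v \<in> piece i)"
      proof
        assume "\<exists>i\<in>{1..N}. u \<in> piece i \<and> v \<in> piece i"
        then obtain i where i: "i \<in> {1..N}" "tt (i-1) \<le> 0" "1 \<le> tt i" using uv by auto
        then show False using tt_prev[of i] lam_lt1[OF i(1)] by auto
      qed
      then show "Q u v" using base h by auto
    qed
  next
    case (Suc n)
    show ?case
    proof (intro allI impI)
      fix u v :: real assume h: "0 \<le> u \<and> u < v \<and> v \<le> 1 \<and> Lm ^ Suc n \<le> v - u"
      show "Q u v"
      proof (cases "\<exists>i\<in>{1..N}. u \<in> piece i \<and> v \<in> piece i")
        case False then show ?thesis using base h by auto
      next
        case True
        then obtain i where i: "i \<in> {1..N}" "u \<in> piece i" "v \<in> piece i" by auto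
        obtain u' v' where u': "u' \<in> {0..1}" "sm i u' = u" and v': "v' \<in> {0..1}" "sm i v' = v"
          using sm_onto[OF i(1) i(2)] sm_onto[OF i(1) i(3)] by metis
        have d: "v - u = lam i * (v' - u')" using sm_diff[OF i(1)] u' v' by auto
        have "0 < lam i * (v' - u')" using h d by linarith
        then have lu: "u' < v'" using zero_less_mult_pos[OF _ lam_pos[OF i(1)]] by fastforce
        have "lam i * Lm ^ n \<le> Lm * Lm ^ n" using Lm_ge[OF i(1)] Lm_pos by (intro mult_right_mono) auto
        also have "\<dots> \<le> lam i * (v' - u')" using h d by simp
        finally have "Lm ^ n \<le> v' - u'" using lam_pos[OF i(1)] by simp
        then have "Q u' v'" using Suc.IH u' v' lu by auto
        then show ?thesis using scale[OF i(1), of u' v'] u' v' lu by auto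
      qed
    qed
  qed
  obtain n where "Lm ^ n < v - u" using real_arch_pow_inv[of "v - u" Lm] uv Lm_lt1 by auto
  then show ?thesis using main[of n] uv by auto
qed

lemma descent_b:
  assumes scale: "\<And>x. 0 \<le> x \<Longrightarrow> x < 1 \<Longrightarrow> Q x \<Longrightarrow> Q (sm N x)"
    and base: "\<And>x. 0 \<le> x \<Longrightarrow> x < tt (N-1) \<Longrightarrow> Q x"
    and x: "0 \<le> x" "x < 1"
  shows "Q x"
proof -
  have N: "N \<in> {1..N}" using N2 by auto
  have main: "\<forall>x. 0 \<le> x \<and> x < 1 \<and> lam N ^ n \<le> 1 - x \<longrightarrow> Q x" for n
  proof (induction n)
    case 0
    have "0 < tt (N-1)" using tt_strict[of 0 "N-1"] tt0 N2 by auto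
    then show ?case using base by auto
  next
    case (Suc n)
    show ?case
    proof (intro allI impI)
      fix x :: real assume h: "0 \<le> x \<and> x < 1 \<and> lam N ^ Suc n \<le> 1 - x"
      show "Q x"
      proof (cases "x < tt (N-1)")
        case True then show ?thesis using base h by auto
      next
        case False
        then have "x \<in> piece N" using h ttN by auto
        then obtain x' where x': "x' \<in> {0..1}" "sm N x' = x" using sm_onto[OF N] by metis
        have e1: "sm N 1 = 1" using sm_eq[of N 1] tt_prev[of N] ttN N2 by auto
        have "sm N 1 - sm N x' = lam N * (1 - x')" using sm_diff[OF N, of 1 x'] .
        then have d: "1 - x = lam N * (1 - x')" using x' e1 by simp
        have "0 < lam N * (1 - x')" using d h by linarith
        then have x1: "x' < 1" using zero_less_mult_pos[OF _ lam_pos[OF N]] by fastforce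
        have "lam N * lam N ^ n \<le> lam N * (1 - x')" using h d by simp
        then have "lam N ^ n \<le> 1 - x'" using lam_pos[OF N] by simp
        then have "Q x'" using Suc.IH x' x1 by auto
        then show ?thesis using scale[of x'] x' x1 by auto
      qed
    qed
  qed
  obtain n where "lam N ^ n < 1 - x" using real_arch_pow_inv[of "1 - x" "lam N"] x lam_lt1[OF N] by auto
  then show ?thesis using main[of n] x by auto
qed

lemma descent_a:
  assumes scale: "\<And>x. 0 < x \<Longrightarrow> x \<le> 1 \<Longrightarrow> Q x \<Longrightarrow> Q (sm 1 x)"
    and base: "\<And>x. tt 1 < x \<Longrightarrow> x \<le> 1 \<Longrightarrow> Q x"
    and x: "0 < x" "x \<le> 1"
  shows "Q x"
proof -
  have one: "1 \<in> {1..N}" using N2 by auto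
  have sm1: "sm 1 y = lam 1 * y" for y using sm_eq[of 1 y] tt0 by simp
  have main: "\<forall>x. 0 < x \<and> x \<le> 1 \<and> lam 1 ^ n \<le> x \<longrightarrow> Q x" for n
  proof (induction n)
    case 0
    have "tt 1 < 1" using tt_strict[of 1 N] ttN N2 by auto
    then show ?case using base by auto
  next
    case (Suc n)
    show ?case
    proof (intro allI impI)
      fix x :: real assume h: "0 < x \<and> x \<le> 1 \<and> lam 1 ^ Suc n \<le> x"
      show "Q x"
      proof (cases "tt 1 < x")
        case True then show ?thesis using base h by auto
      next
        case False
        then have "x \<in> piece 1" using h tt0 by auto
        then obtain x' where x': "x' \<in> {0..1}" "sm 1 x' = x" using sm_onto[OF one] by fastforce
        have x0: "0 < x'" using x' h sm1[of x'] by (cases "0 < x'") auto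
        have "lam 1 * lam 1 ^ n \<le> lam 1 * x'" using h x' sm1 by simp
        then have "lam 1 ^ n \<le> x'" using lam_pos[OF one] by simp
        then have "Q x'" using Suc.IH x' x0 by auto
        then show ?thesis using scale[of x'] x' x0 by auto
      qed
    qed
  qed
  obtain n where "lam 1 ^ n < x" using real_arch_pow_inv[of x "lam 1"] x lam_lt1[OF one] by auto
  then show ?thesis using main[of n] x by auto
qed

end



context hifs begin

lemma fixpt_unique: "i \<in> {1..N} \<Longrightarrow> S i x = x \<Longrightarrow> S i y = y \<Longrightarrow> x = y"
proof -
  assume i: "i \<in> {1..N}" and x: "S i x = x" and y: "S i y = y"
  have "dist x y = r i * dist x y" using S_sim[OF i, of x y] x y by simp
  then have "(1 - r i) * dist x y = 0" by (simp add: algebra_simps)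
  then show "x = y" using r_lt1[OF i] by simp
qed

lemma sm0: "i \<in> {1..N} \<Longrightarrow> sm i 0 = tt (i-1)" using sm_eq by simp
lemma sm1: "i \<in> {1..N} \<Longrightarrow> sm i 1 = tt i" using sm_eq tt_prev by simp

lemma phi0: "\<phi> 0 = a"
proof -
  have one: "1 \<in> {1..N}" using N2 by auto
  have "\<phi> 0 = S 1 (\<phi> 0)" using phi_fun[OF one, of 0] sm0[OF one] tt0 by simp
  then show ?thesis using fixpt_unique[OF one] path_a by metis
qed

lemma phi1: "\<phi> 1 = b"
proof -
  have N: "N \<in> {1..N}" using N2 by auto
  have "\<phi> 1 = S N (\<phi> 1)" using phi_fun[OF N, of 1] sm1[OF N] ttN by simp
  then show ?thesis using fixpt_unique[OF N] path_b by metis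
qed

lemma phi_tt: "i \<in> {1..N} \<Longrightarrow> \<phi> (tt i) = S i b"
  using phi_fun[of i 1] sm1 phi1 by simp
lemma phi_tt': "i \<in> {1..N} \<Longrightarrow> \<phi> (tt (i-1)) = S i a"
  using phi_fun[of i 0] sm0 phi0 by simp

lemma piece_pre: "i \<in> {1..N} \<Longrightarrow> u \<in> piece i \<Longrightarrow>
   \<exists>u'\<in>{0..1}. u = sm i u' \<and> tt i - u = lam i * (1 - u') \<and> u - tt (i-1) = lam i * u'"
proof -
  assume i: "i \<in> {1..N}" and u: "u \<in> piece i"
  obtain u' where u': "u' \<in> {0..1}" "sm i u' = u" using sm_onto[OF i u] by blast
  have "sm i 1 - sm i u' = lam i * (1 - u')" "sm i u' - sm i 0 = lam i * (u' - 0)" using sm_diff[OF i] by blast+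
  then show ?thesis using u' sm0[OF i] sm1[OF i] by auto
qed

lemma phi_piece: "i \<in> {1..N} \<Longrightarrow> u \<in> piece i \<Longrightarrow> \<phi> u \<in> S i ` \<gamma>"
  using piece_pre[of i u] phi_fun[of i] phi_in by fastforce

lemma phi_scale: "i \<in> {1..N} \<Longrightarrow> x \<in> {0..1} \<Longrightarrow> y \<in> {0..1} \<Longrightarrow> dist (\<phi> (sm i x)) (\<phi> (sm i y)) = r i * dist (\<phi> x) (\<phi> y)"
  using phi_fun S_sim by simp

definition "DD = diameter \<gamma>"
lemma phi_D: "u \<in> {0..1} \<Longrightarrow> v \<in> {0..1} \<Longrightarrow> dist (\<phi> u) (\<phi> v) \<le> DD"
  unfolding DD_def using phi_in compact_imp_bounded[OF gam_compact] by (intro diameter_bounded_bound) auto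
lemma DD_nonneg: "DD \<ge> 0" using phi_D[of 0 0] by auto

lemma split_pieces:
  assumes "0 \<le> u" "u < v" "v \<le> 1" "\<not> (\<exists>i\<in>{1..N}. u \<in> piece i \<and> v \<in> piece i)"
  shows "(\<exists>i. i \<in> {1..N-1} \<and> u \<in> piece i \<and> v \<in> piece (Suc i)) \<or>
         (\<exists>i j. i \<in> {1..N} \<and> j \<in> {1..N} \<and> Suc i < j \<and> u \<in> piece i \<and> v \<in> piece j)"
proof -
  obtain i where i: "i \<in> {1..N}" "u \<in> piece i" using cover1[of u] assms by auto
  obtain j where j: "j \<in> {1..N}" "v \<in> piece j" using cover1[of v] assms by auto
  have "i \<noteq> j" using assms i j by auto
  moreover have "\<not> j < i"
  proof
    assume "j < i"
    then have "tt j \<le> tt (i-1)" by (intro tt_mono) auto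
    then show False using i j assms by auto
  qed
  ultimately have "i < j" by auto
  show ?thesis
  proof (cases "j = Suc i")
    case True
    then have "i \<in> {1..N-1}" using i j by auto
    then show ?thesis using i j True by blast
  next
    case False
    then have "Suc i < j" using \<open>i < j\<close> by auto
    then show ?thesis using i j by blast
  qed
qed

lemma nonadj_gap: "i \<in> {1..N} \<Longrightarrow> j \<in> {1..N} \<Longrightarrow> Suc i < j \<Longrightarrow> u \<in> piece i \<Longrightarrow> v \<in> piece j \<Longrightarrow> mm \<le> v - u"
proof -
  assume i: "i \<in> {1..N}" and j: "j \<in> {1..N}" and ij: "Suc i < j" and u: "u \<in> piece i" and v: "v \<in> piece j"
  have "tt (Suc i) \<le> tt (j-1)" using ij by (intro tt_mono) auto
  moreover have "tt (Suc i) = tt i + lam (Suc i)" by (rule ttSuc)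
  moreover have "mm \<le> lam (Suc i)" using mm_le ij j by auto
  ultimately show ?thesis using u v by auto
qed

definition "CC = DD / mm powr (1/s)"
lemma CC_nonneg: "CC \<ge> 0" unfolding CC_def using DD_nonneg by auto
lemma CC_big: "mm \<le> d \<Longrightarrow> DD \<le> CC * d powr (1/s)"
proof -
  assume d: "mm \<le> d"
  have "mm powr (1/s) \<le> d powr (1/s)" using d mm_pos s_pos by (intro powr_mono2) auto
  then have "CC * mm powr (1/s) \<le> CC * d powr (1/s)" using CC_nonneg by (intro mult_left_mono)
  moreover have "CC * mm powr (1/s) = DD" unfolding CC_def using mm_pos by simp
  ultimately show ?thesis by simp
qed

lemma upper_b: "x \<in> {0..1} \<Longrightarrow> dist (\<phi> x) b \<le> CC * (1 - x) powr (1/s)"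
proof (cases "x = 1")
  case True then show ?thesis using phi1 by simp
next
  case False
  assume x: "x \<in> {0..1}"
  have N: "N \<in> {1..N}" using N2 by auto
  show ?thesis
  proof (rule descent_b[where Q="\<lambda>x. dist (\<phi> x) b \<le> CC * (1 - x) powr (1/s)"])
    fix y :: real assume y: "0 \<le> y" "y < 1" and Q: "dist (\<phi> y) b \<le> CC * (1 - y) powr (1/s)"
    obtain y' where "y' \<in> {0..1}" "sm N y = sm N y'" "tt N - sm N y = lam N * (1 - y')"
      using piece_pre[OF N, of "sm N y"] sm_range[OF N, of y] y by auto
    then have d: "1 - sm N y = lam N * (1 - y)" using sm_inj[OF N] ttN by auto
    have "dist (\<phi> (sm N y)) b = dist (\<phi> (sm N y)) (\<phi> (sm N 1))" using sm1[OF N] ttN phi1 by simp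
    also have "\<dots> = r N * dist (\<phi> y) b" using phi_scale[OF N, of y 1] y phi1 by simp
    also have "\<dots> \<le> r N * (CC * (1 - y) powr (1/s))" using Q r_pos[OF N] by simp
    also have "\<dots> = CC * (lam N * (1 - y)) powr (1/s)" using powr_scale[OF N, of "1 - y"] y by simp
    finally show "dist (\<phi> (sm N y)) b \<le> CC * (1 - sm N y) powr (1/s)" using d by simp
  next
    fix y :: real assume y: "0 \<le> y" "y < tt (N-1)"
    have "lam N \<le> 1 - y" using y tt_prev[of N] ttN N2 by auto
    then have "mm \<le> 1 - y" using mm_le[OF N] by linarith
    then have "DD \<le> CC * (1 - y) powr (1/s)" by (rule CC_big)
    moreover have "dist (\<phi> y) b \<le> DD" using phi_D[of y 1] phi1 y tt_le1[of "N-1"] by auto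
    ultimately show "dist (\<phi> y) b \<le> CC * (1 - y) powr (1/s)" by linarith
  qed (use x False in auto)
qed

lemma upper_a: "x \<in> {0..1} \<Longrightarrow> dist (\<phi> x) a \<le> CC * x powr (1/s)"
proof (cases "x = 0")
  case True then show ?thesis using phi0 by simp
next
  case False
  assume x: "x \<in> {0..1}"
  have one: "1 \<in> {1..N}" using N2 by auto
  show ?thesis
  proof (rule descent_a[where Q="\<lambda>x. dist (\<phi> x) a \<le> CC * x powr (1/s)"])
    fix y :: real assume y: "0 < y" "y \<le> 1" and Q: "dist (\<phi> y) a \<le> CC * y powr (1/s)"
    have d: "sm 1 y = lam 1 * y" using sm_eq[of 1 y] tt0 by simp
    have "dist (\<phi> (sm 1 y)) a = dist (\<phi> (sm 1 y)) (\<phi> (sm 1 0))" using sm0[OF one] tt0 phi0 by simp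
    also have "\<dots> = r 1 * dist (\<phi> y) a" using phi_scale[OF one, of y 0] y phi0 by simp
    also have "\<dots> \<le> r 1 * (CC * y powr (1/s))" using Q r_pos[OF one] by simp
    also have "\<dots> = CC * (lam 1 * y) powr (1/s)" using powr_scale[OF one, of y] y by simp
    finally show "dist (\<phi> (sm 1 y)) a \<le> CC * (sm 1 y) powr (1/s)" using d by simp
  next
    fix y :: real assume y: "tt 1 < y" "y \<le> 1"
    have "lam 1 \<le> y" using y tt_prev[of 1] tt0 by auto
    then have "mm \<le> y" using mm_le[OF one] by linarith
    then have "DD \<le> CC * y powr (1/s)" by (rule CC_big)
    moreover have "dist (\<phi> y) a \<le> DD" using phi_D[of y 0] phi0 y tt_ge0[of 1] by auto
    ultimately show "dist (\<phi> y) a \<le> CC * y powr (1/s)" by linarith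
  qed (use x False in auto)
qed

end



context hifs begin

lemma left_scale: "i \<in> {1..N} \<Longrightarrow> u \<in> piece i \<Longrightarrow>
  \<exists>u'\<in>{0..1}. dist (\<phi> u) (\<phi> (tt i)) = r i * dist (\<phi> u') b \<and> tt i - u = lam i * (1 - u')"
proof -
  assume i: "i \<in> {1..N}" and u: "u \<in> piece i"
  obtain u' where u': "u' \<in> {0..1}" "u = sm i u'" "tt i - u = lam i * (1 - u')" using piece_pre[OF i u] by blast
  have "dist (\<phi> u) (\<phi> (tt i)) = dist (\<phi> (sm i u')) (\<phi> (sm i 1))" using u' sm1[OF i] by simp
  also have "\<dots> = r i * dist (\<phi> u') b" using phi_scale[OF i, of u' 1] u' phi1 by simp
  finally show ?thesis using u' by blast
qed

lemma right_scale: "i \<in> {1..N} \<Longrightarrow> v \<in> piece i \<Longrightarrow>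
  \<exists>v'\<in>{0..1}. dist (\<phi> (tt (i-1))) (\<phi> v) = r i * dist (\<phi> v') a \<and> v - tt (i-1) = lam i * v'"
proof -
  assume i: "i \<in> {1..N}" and v: "v \<in> piece i"
  obtain v' where v': "v' \<in> {0..1}" "v = sm i v'" "v - tt (i-1) = lam i * v'" using piece_pre[OF i v] by blast
  have "dist (\<phi> (tt (i-1))) (\<phi> v) = dist (\<phi> (sm i v')) (\<phi> (sm i 0))" using v' sm0[OF i] by (simp add: dist_commute)
  also have "\<dots> = r i * dist (\<phi> v') a" using phi_scale[OF i, of v' 0] v' phi0 by simp
  finally show ?thesis using v' by blast
qed

lemma upper_left: "i \<in> {1..N} \<Longrightarrow> u \<in> piece i \<Longrightarrow> dist (\<phi> u) (\<phi> (tt i)) \<le> CC * (tt i - u) powr (1/s)"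
proof -
  assume i: "i \<in> {1..N}" and u: "u \<in> piece i"
  obtain u' where u': "u' \<in> {0..1}" "dist (\<phi> u) (\<phi> (tt i)) = r i * dist (\<phi> u') b" "tt i - u = lam i * (1 - u')"
    using left_scale[OF i u] by blast
  have "r i * dist (\<phi> u') b \<le> r i * (CC * (1 - u') powr (1/s))" using upper_b[OF u'(1)] r_pos[OF i] by simp
  also have "\<dots> = CC * (lam i * (1 - u')) powr (1/s)" using powr_scale[OF i, of "1-u'"] u' by simp
  finally show ?thesis using u' by simp
qed

lemma upper_right: "i \<in> {1..N} \<Longrightarrow> v \<in> piece i \<Longrightarrow> dist (\<phi> (tt (i-1))) (\<phi> v) \<le> CC * (v - tt (i-1)) powr (1/s)"
proof -
  assume i: "i \<in> {1..N}" and v: "v \<in> piece i"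
  obtain v' where v': "v' \<in> {0..1}" "dist (\<phi> (tt (i-1))) (\<phi> v) = r i * dist (\<phi> v') a" "v - tt (i-1) = lam i * v'"
    using right_scale[OF i v] by blast
  have "r i * dist (\<phi> v') a \<le> r i * (CC * v' powr (1/s))" using upper_a[OF v'(1)] r_pos[OF i] by simp
  also have "\<dots> = CC * (lam i * v') powr (1/s)" using powr_scale[OF i, of "v'"] v' by simp
  finally show ?thesis using v' by simp
qed

lemma upper_lt: "0 \<le> u \<Longrightarrow> u < v \<Longrightarrow> v \<le> 1 \<Longrightarrow> dist (\<phi> u) (\<phi> v) \<le> (2 * CC) * (v - u) powr (1/s)"
proof (rule descent[where Q="\<lambda>u v. dist (\<phi> u) (\<phi> v) \<le> (2 * CC) * (v - u) powr (1/s)"])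
  fix i u v assume i: "i \<in> {1..N}" and uv: "0 \<le> u" "u < v" "v \<le> 1"
    and Q: "dist (\<phi> u) (\<phi> v) \<le> (2 * CC) * (v - u) powr (1/s)"
  have "dist (\<phi> (sm i u)) (\<phi> (sm i v)) = r i * dist (\<phi> u) (\<phi> v)" using phi_scale[OF i, of u v] uv by simp
  also have "\<dots> \<le> r i * ((2 * CC) * (v - u) powr (1/s))" using Q r_pos[OF i] by simp
  also have "\<dots> = (2 * CC) * (lam i * (v - u)) powr (1/s)" using powr_scale[OF i, of "v - u"] uv by simp
  finally show "dist (\<phi> (sm i u)) (\<phi> (sm i v)) \<le> (2 * CC) * (sm i v - sm i u) powr (1/s)"
    using sm_diff[OF i, of v u] by simp
next
  fix u v assume uv: "0 \<le> u" "u < v" "v \<le> 1" and np: "\<not> (\<exists>i\<in>{1..N}. u \<in> piece i \<and> v \<in> piece i)"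
  have p: "(v - u) powr (1/s) \<ge> 0" by simp
  from split_pieces[OF uv np] show "dist (\<phi> u) (\<phi> v) \<le> (2 * CC) * (v - u) powr (1/s)"
  proof
    assume "\<exists>i. i \<in> {1..N-1} \<and> u \<in> piece i \<and> v \<in> piece (Suc i)"
    then obtain i where i: "i \<in> {1..N-1}" "u \<in> piece i" "v \<in> piece (Suc i)" by blast
    have i1: "i \<in> {1..N}" and i2: "Suc i \<in> {1..N}" using i by auto
    have 1: "dist (\<phi> u) (\<phi> (tt i)) \<le> CC * (v - u) powr (1/s)"
    proof -
      have "dist (\<phi> u) (\<phi> (tt i)) \<le> CC * (tt i - u) powr (1/s)" using upper_left[OF i1 i(2)] .
      also have "\<dots> \<le> CC * (v - u) powr (1/s)"
        using i CC_nonneg s_pos by (intro mult_left_mono powr_mono2) auto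
      finally show ?thesis .
    qed
    have 2: "dist (\<phi> (tt i)) (\<phi> v) \<le> CC * (v - u) powr (1/s)"
    proof -
      have "dist (\<phi> (tt i)) (\<phi> v) \<le> CC * (v - tt i) powr (1/s)" using upper_right[OF i2 i(3)] by simp
      also have "\<dots> \<le> CC * (v - u) powr (1/s)"
        using i CC_nonneg s_pos by (intro mult_left_mono powr_mono2) auto
      finally show ?thesis .
    qed
    have "dist (\<phi> u) (\<phi> v) \<le> dist (\<phi> u) (\<phi> (tt i)) + dist (\<phi> (tt i)) (\<phi> v)" by (rule dist_triangle)
    then show ?thesis using 1 2 by linarith
  next
    assume "\<exists>i j. i \<in> {1..N} \<and> j \<in> {1..N} \<and> Suc i < j \<and> u \<in> piece i \<and> v \<in> piece j"
    then have "mm \<le> v - u" using nonadj_gap by blast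
    then have "DD \<le> CC * (v - u) powr (1/s)" by (rule CC_big)
    moreover have "dist (\<phi> u) (\<phi> v) \<le> DD" using phi_D uv by auto
    moreover have "CC * (v - u) powr (1/s) \<ge> 0" using CC_nonneg by simp
    ultimately show ?thesis by linarith
  qed
qed

definition "KU = max 1 (2 * CC)"

lemma upper: "u \<in> {0..1} \<Longrightarrow> v \<in> {0..1} \<Longrightarrow> dist (\<phi> u) (\<phi> v) \<le> KU * \<bar>u - v\<bar> powr (1/s)"
proof -
  assume u: "u \<in> {0..1}" and v: "v \<in> {0..1}"
  have le: "2 * CC * d \<le> KU * d" if "d \<ge> 0" for d unfolding KU_def using that by (intro mult_right_mono) auto
  consider "u < v" | "u = v" | "v < u" by linarith
  then show ?thesis
  proof cases
    case 1
    have "dist (\<phi> u) (\<phi> v) \<le> 2 * CC * (v - u) powr (1/s)" using upper_lt[of u v] u v 1 by auto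
    also have "\<dots> \<le> KU * (v - u) powr (1/s)" by (rule le) simp
    finally show ?thesis using 1 by simp
  next
    case 2 then show ?thesis by simp
  next
    case 3
    have "dist (\<phi> v) (\<phi> u) \<le> 2 * CC * (u - v) powr (1/s)" using upper_lt[of v u] u v 3 by auto
    also have "\<dots> \<le> KU * (u - v) powr (1/s)" by (rule le) simp
    finally show ?thesis using 3 by (simp add: dist_commute)
  qed
qed

lemma phi_cont: "continuous_on {0..1} \<phi>"
proof -
  show ?thesis unfolding continuous_on_iff
  proof (intro ballI allI impI)
    fix x0 e :: real assume e: "e > 0"
    define d where "d = (e / KU) powr s"
    have KU: "KU \<ge> 1" unfolding KU_def by auto
    have d: "d > 0" unfolding d_def using e KU by simp
    assume x0: "x0 \<in> {0..1}"
    show "\<exists>d>0. \<forall>x'\<in>{0..1}. dist x' x0 < d \<longrightarrow> dist (\<phi> x') (\<phi> x0) < e"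
    proof (intro exI[of _ d] conjI ballI impI d)
      fix x' :: real assume x: "x' \<in> {0..1}" and xd: "dist x' x0 < d"
      define x where "x = x0"
      have x: "x \<in> {0..1}" "x' \<in> {0..1}" "dist x' x < d" using x0 x xd by (auto simp: x_def)
      have "\<bar>x' - x\<bar> powr (1/s) < d powr (1/s)"
        using x(3) s_pos by (intro powr_less_mono2) (auto simp: dist_real_def)
      also have "d powr (1/s) = e / KU" unfolding d_def using e KU s_pos by (simp add: powr_powr)
      finally have "KU * \<bar>x' - x\<bar> powr (1/s) < e" using KU by (simp add: field_simps)
      then show "dist (\<phi> x') (\<phi> x0) < e" using upper[of x' x] x unfolding x_def by linarith
    qed
  qed
qed

end



context hifs begin

lemma phi_image: "\<phi> ` {0..1} = \<gamma>"
proof -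
  let ?G = "\<phi> ` {0..1}"
  have Gc: "compact ?G" using compact_continuous_image[OF phi_cont] by simp
  have Gne: "?G \<noteq> {}" by auto
  have Gsub: "?G \<subseteq> \<gamma>" using phi_in by auto
  have Ginv: "i \<in> {1..N} \<Longrightarrow> z \<in> ?G \<Longrightarrow> S i z \<in> ?G" for i z
  proof -
    assume i: "i \<in> {1..N}" and "z \<in> ?G"
    then obtain t where t: "t \<in> {0..1}" "z = \<phi> t" by auto
    then have "S i z = \<phi> (sm i t)" using phi_fun[OF i t(1)] by simp
    then show ?thesis using sm_range01[OF i t(1)] by auto
  qed
  have "continuous_on \<gamma> (\<lambda>x. infdist x ?G)" by (rule continuous_on_infdist[OF continuous_on_id])
  from continuous_attains_sup[OF gam_compact gam_ne this]
  obtain x0 where x0: "x0 \<in> \<gamma>" "\<forall>y\<in>\<gamma>. infdist y ?G \<le> infdist x0 ?G" by blast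
  obtain i y where i: "i \<in> {1..N}" and y: "y \<in> \<gamma>" and xy: "x0 = S i y" 
  proof -
    from x0(1) have "x0 \<in> (\<Union>i\<in>{1..N}. S i ` \<gamma>)" using gam_eq by blast
    then show ?thesis using that by blast
  qed
  obtain z where z: "z \<in> ?G" "infdist y ?G = dist y z"
    using infdist_attains_inf[OF compact_imp_closed[OF Gc] Gne] by blast
  have "infdist x0 ?G \<le> dist (S i y) (S i z)" using xy Ginv[OF i z(1)] by (auto intro: infdist_le)
  also have "\<dots> = r i * infdist y ?G" using S_sim[OF i] z by simp
  also have "\<dots> \<le> r i * infdist x0 ?G" using x0(2) y r_pos[OF i] by (intro mult_left_mono) auto
  finally have "(1 - r i) * infdist x0 ?G \<le> 0" by (simp add: algebra_simps)
  moreover have "1 - r i > 0" using r_lt1[OF i] by simp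
  ultimately have "infdist x0 ?G \<le> 0" by (simp add: mult_le_0_iff)
  have "\<forall>y\<in>\<gamma>. infdist y ?G = 0"
  proof
    fix y assume "y \<in> \<gamma>"
    then have "infdist y ?G \<le> 0" using x0(2) \<open>infdist x0 ?G \<le> 0\<close> by fastforce
    then show "infdist y ?G = 0" using infdist_nonneg[of y ?G] by linarith
  qed
  then have "\<gamma> \<subseteq> ?G" using in_closed_iff_infdist_zero[OF compact_imp_closed[OF Gc] Gne] by blast
  then show ?thesis using Gsub by auto
qed

end



context hifs begin

lemma Sgam_compact: "i \<in> {1..N} \<Longrightarrow> compact (S i ` \<gamma>)"
  using compact_continuous_image[OF S_contI gam_compact] by blast

lemma arc_adj: "i \<in> {1..N-1} \<Longrightarrow> S i ` \<gamma> \<inter> S (Suc i) ` \<gamma> = {S (Suc i) a}"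
  using arc unfolding ifs_arc_def by auto

lemma arc_disj: "i \<in> {1..N} \<Longrightarrow> j \<in> {1..N} \<Longrightarrow> Suc i < j \<Longrightarrow> S i ` \<gamma> \<inter> S j ` \<gamma> = {}"
  using arc unfolding ifs_arc_def by auto

lemma sep: "\<exists>\<delta>>0. \<forall>i j. i \<in> {1..N} \<longrightarrow> j \<in> {1..N} \<longrightarrow> Suc i < j \<longrightarrow>
   (\<forall>x\<in>S i ` \<gamma>. \<forall>y\<in>S j ` \<gamma>. \<delta> \<le> dist x y)"
proof -
  let ?P = "{(i,j). i \<in> {1..N} \<and> j \<in> {1..N} \<and> Suc i < j}"
  have fin: "finite ?P" by (rule finite_subset[of _ "{1..N} \<times> {1..N}"]) auto
  have "\<forall>p\<in>?P. \<exists>d>0. \<forall>x\<in>S (fst p) ` \<gamma>. \<forall>y\<in>S (snd p) ` \<gamma>. d \<le> dist x y"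
  proof
    fix p assume "p \<in> ?P"
    then obtain i j where p: "p = (i,j)" "i \<in> {1..N}" "j \<in> {1..N}" "Suc i < j" by auto
    show "\<exists>d>0. \<forall>x\<in>S (fst p) ` \<gamma>. \<forall>y\<in>S (snd p) ` \<gamma>. d \<le> dist x y"
      using separate_compact_closed[OF Sgam_compact[OF p(2)] compact_imp_closed[OF Sgam_compact[OF p(3)]]
          arc_disj[OF p(2-4)]] p(1) by simp
  qed
  from bchoice[OF this] obtain d where d: "\<forall>p\<in>?P. d p > 0 \<and> (\<forall>x\<in>S (fst p) ` \<gamma>. \<forall>y\<in>S (snd p) ` \<gamma>. d p \<le> dist x y)"
    by blast
  define \<delta> where "\<delta> = Min (insert 1 (d ` ?P))"
  have "\<delta> > 0" unfolding \<delta>_def using fin d by (subst Min_gr_iff) auto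
  moreover have "\<delta> \<le> d p" if "p \<in> ?P" for p unfolding \<delta>_def using fin that by (intro Min_le) auto
  ultimately show ?thesis
  proof (intro exI[of _ \<delta>] conjI allI impI ballI)
    fix i j x y assume h: "i \<in> {1..N}" "j \<in> {1..N}" "Suc i < j" "x \<in> S i ` \<gamma>" "y \<in> S j ` \<gamma>"
    then have p: "(i,j) \<in> ?P" by auto
    then have "d (i,j) \<le> dist x y" using d h by auto
    moreover have "\<delta> \<le> d (i,j)" using p \<open>\<And>p. p \<in> ?P \<Longrightarrow> \<delta> \<le> d p\<close> by blast
    ultimately show "\<delta> \<le> dist x y" by linarith
  qed
qed

definition "\<delta>0 = (SOME \<delta>. \<delta> > 0 \<and> (\<forall>i j. i \<in> {1..N} \<longrightarrow> j \<in> {1..N} \<longrightarrow> Suc i < j \<longrightarrow>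
   (\<forall>x\<in>S i ` \<gamma>. \<forall>y\<in>S j ` \<gamma>. \<delta> \<le> dist x y)))"

lemma d0: "\<delta>0 > 0" "i \<in> {1..N} \<Longrightarrow> j \<in> {1..N} \<Longrightarrow> Suc i < j \<Longrightarrow> x \<in> S i ` \<gamma> \<Longrightarrow> y \<in> S j ` \<gamma> \<Longrightarrow> \<delta>0 \<le> dist x y"
  using someI_ex[OF sep] unfolding \<delta>0_def by blast+

end

locale hifs_qa = hifs +
  fixes f :: "real \<Rightarrow> 'a" and \<eta> :: "real \<Rightarrow> real"
  assumes fc: "continuous_on {0..1} f" and fi: "inj_on f {0..1}" and fim: "f ` {0..1} = \<gamma>"
    and qs: "\<And>x y z t. x \<in> {0..1} \<Longrightarrow> y \<in> {0..1} \<Longrightarrow> z \<in> {0..1} \<Longrightarrow> t \<ge> 0 \<Longrightarrow>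
            dist x z \<le> t * dist y z \<Longrightarrow> dist (f x) (f z) \<le> \<eta> t * dist (f y) (f z)"
    and eta_pos: "\<eta> 1 > 0"
    and ab: "a \<noteq> b"
begin

abbreviation "H \<equiv> \<eta> 1"
definition "g = the_inv_into {0..1} f"

lemma g_range: "y \<in> \<gamma> \<Longrightarrow> g y \<in> {0..1}"
  unfolding g_def using the_inv_into_into[OF fi, of y "{0..1}"] fim by auto
lemma fg: "y \<in> \<gamma> \<Longrightarrow> f (g y) = y"
  unfolding g_def using f_the_inv_into_f[OF fi, of y] fim by auto
lemma gf: "x \<in> {0..1} \<Longrightarrow> g (f x) = x"
  unfolding g_def using the_inv_into_f_f[OF fi] by auto
lemma g_cont: "continuous_on \<gamma> g"
  using continuous_on_inv[OF fc, of g] gf fim by auto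

lemma BT: "p \<in> {0..1} \<Longrightarrow> q \<in> {0..1} \<Longrightarrow> w \<in> {0..1} \<Longrightarrow> \<bar>w - p\<bar> \<le> \<bar>q - p\<bar> \<Longrightarrow>
  dist (f w) (f p) \<le> H * dist (f q) (f p)"
  using qs[of w q p 1] by (simp add: dist_real_def)

lemma btw:
  assumes i: "i \<in> {1..N-1}" and u: "u \<in> piece i" and v: "v \<in> piece (Suc i)"
  shows "min (g (\<phi> u)) (g (\<phi> v)) \<le> g (\<phi> (tt i)) \<and> g (\<phi> (tt i)) \<le> max (g (\<phi> u)) (g (\<phi> v))"
proof -
  have i1: "i \<in> {1..N}" and i2: "Suc i \<in> {1..N}" using i by auto
  have u01: "u \<in> {0..1}" using u tt_ge0[of "i-1"] tt_le1[of i] i by force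
  have "Suc i \<le> N" using i by auto
  then have v01: "v \<in> {0..1}" using v tt_ge0[of i] tt_le1[of "Suc i"] by auto
  have t01: "tt i \<in> {0..1}" using tt_ge0[of i] tt_le1[of i] i by auto
  have ptt: "\<phi> (tt i) = S (Suc i) a" using phi_tt'[OF i2] by simp
  have inter: "y \<in> S i ` \<gamma> \<Longrightarrow> y \<in> S (Suc i) ` \<gamma> \<Longrightarrow> y = \<phi> (tt i)" for y
    using arc_adj[OF i] ptt by auto
  let ?A = "\<phi> ` {u..tt i}" and ?B = "\<phi> ` {tt i..v}"
  have A01: "{u..tt i} \<subseteq> {0..1}" and B01: "{tt i..v} \<subseteq> {0..1}" using u01 v01 t01 by auto
  have Ag: "?A \<subseteq> \<gamma>" and Bg: "?B \<subseteq> \<gamma>" using A01 B01 phi_in by auto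
  have AS: "?A \<subseteq> S i ` \<gamma>" using phi_piece[OF i1] u by auto
  have BS: "?B \<subseteq> S (Suc i) ` \<gamma>" using phi_piece[OF i2] v by auto
  have cA: "connected (g ` ?A)"
    by (intro connected_continuous_image continuous_on_subset[OF g_cont Ag]
        continuous_on_subset[OF phi_cont A01]) simp
  have cB: "connected (g ` ?B)"
    by (intro connected_continuous_image continuous_on_subset[OF g_cont Bg]
        continuous_on_subset[OF phi_cont B01]) simp
  have uA: "g (\<phi> u) \<in> g ` ?A" and tA: "g (\<phi> (tt i)) \<in> g ` ?A" using u by auto
  have vB: "g (\<phi> v) \<in> g ` ?B" and tB: "g (\<phi> (tt i)) \<in> g ` ?B" using v by auto
  have gv: "\<phi> v \<in> \<gamma>" "\<phi> u \<in> \<gamma>" "\<phi> (tt i) \<in> \<gamma>" using phi_in u01 v01 t01 by auto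
  have iA: "\<forall>x\<in>g ` ?A. \<forall>y\<in>g ` ?A. \<forall>z. x \<le> z \<longrightarrow> z \<le> y \<longrightarrow> z \<in> g ` ?A"
    using cA by (simp only: connected_iff_interval)
  have iB: "\<forall>x\<in>g ` ?B. \<forall>y\<in>g ` ?B. \<forall>z. x \<le> z \<longrightarrow> z \<le> y \<longrightarrow> z \<in> g ` ?B"
    using cB by (simp only: connected_iff_interval)
  have QA: "g (\<phi> v) = g (\<phi> (tt i))" if hh: "g (\<phi> v) \<in> g ` ?A"
  proof -
    obtain y where y: "y \<in> {u..tt i}" "g (\<phi> v) = g (\<phi> y)" using hh by auto
    have "\<phi> y \<in> \<gamma>" using y Ag by auto
    then have "\<phi> v = \<phi> y" using fg[of "\<phi> v"] fg[of "\<phi> y"] y gv by metis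
    then have "\<phi> v \<in> S i ` \<gamma>" using AS y by auto
    moreover have "\<phi> v \<in> S (Suc i) ` \<gamma>" using BS v by auto
    ultimately have "\<phi> v = \<phi> (tt i)" using inter by auto
    then show ?thesis by simp
  qed
  have PB: "g (\<phi> u) = g (\<phi> (tt i))" if hh: "g (\<phi> u) \<in> g ` ?B"
  proof -
    obtain y where y: "y \<in> {tt i..v}" "g (\<phi> u) = g (\<phi> y)" using hh by auto
    have "\<phi> y \<in> \<gamma>" using y Bg by auto
    then have "\<phi> u = \<phi> y" using fg[of "\<phi> u"] fg[of "\<phi> y"] y gv by metis
    then have "\<phi> u \<in> S (Suc i) ` \<gamma>" using BS y by auto
    moreover have "\<phi> u \<in> S i ` \<gamma>" using AS u by auto
    ultimately have "\<phi> u = \<phi> (tt i)" using inter by auto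
    then show ?thesis by simp
  qed
  let ?P = "g (\<phi> u)" and ?Q = "g (\<phi> v)" and ?W = "g (\<phi> (tt i))"
  have 1: "\<not> ?W > max ?P ?Q"
  proof
    assume h: "?W > max ?P ?Q"
    show False
    proof (cases "?P \<le> ?Q")
      case True
      then have "?Q \<in> g ` ?A" using iA uA tA h by (meson less_imp_le max.strict_boundedE)
      then show False using QA h by auto
    next
      case False
      then have "?P \<in> g ` ?B" using iB vB tB h by (meson less_imp_le max.strict_boundedE not_le)
      then show False using PB h by auto
    qed
  qed
  have 2: "\<not> ?W < min ?P ?Q"
  proof
    assume h: "?W < min ?P ?Q"
    show False
    proof (cases "?P \<le> ?Q")
      case True
      then have "?P \<in> g ` ?B" using iB vB tB h by (meson less_imp_le min.strict_boundedE)
      then show False using PB h by auto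
    next
      case False
      then have "?Q \<in> g ` ?A" using iA uA tA h by (meson less_imp_le min.strict_boundedE not_le)
      then show False using QA h by auto
    qed
  qed
  show ?thesis using 1 2 by linarith
qed

lemma btw_bt:
  assumes i: "i \<in> {1..N-1}" and u: "u \<in> piece i" and v: "v \<in> piece (Suc i)"
  shows "dist (\<phi> (tt i)) (\<phi> u) \<le> H * dist (\<phi> v) (\<phi> u)" "dist (\<phi> (tt i)) (\<phi> v) \<le> H * dist (\<phi> u) (\<phi> v)"
proof -
  have u01: "u \<in> {0..1}" using u tt_ge0[of "i-1"] tt_le1[of i] i by force
  have "Suc i \<le> N" using i by auto
  then have v01: "v \<in> {0..1}" using v tt_ge0[of i] tt_le1[of "Suc i"] by auto
  have t01: "tt i \<in> {0..1}" using tt_ge0[of i] tt_le1[of i] i by auto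
  have gv: "\<phi> v \<in> \<gamma>" "\<phi> u \<in> \<gamma>" "\<phi> (tt i) \<in> \<gamma>" using phi_in u01 v01 t01 by auto
  let ?P = "g (\<phi> u)" and ?Q = "g (\<phi> v)" and ?W = "g (\<phi> (tt i))"
  have r: "?P \<in> {0..1}" "?Q \<in> {0..1}" "?W \<in> {0..1}" using g_range gv by auto
  have b: "min ?P ?Q \<le> ?W \<and> ?W \<le> max ?P ?Q" using btw[OF i u v] .
  have "dist (f ?W) (f ?P) \<le> H * dist (f ?Q) (f ?P)" using BT[OF r(1,2,3)] b by (intro BT r) auto
  then show "dist (\<phi> (tt i)) (\<phi> u) \<le> H * dist (\<phi> v) (\<phi> u)" using fg gv by simp
  have "dist (f ?W) (f ?Q) \<le> H * dist (f ?P) (f ?Q)" using b by (intro BT r) auto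
  then show "dist (\<phi> (tt i)) (\<phi> v) \<le> H * dist (\<phi> u) (\<phi> v)" using fg gv by simp
qed

end



context hifs_qa begin

definition "c0 = min \<delta>0 (min (r N * dist a b / H) (r 1 * dist a b / H))"
lemma c0_pos: "c0 > 0"
proof -
  have "r N > 0" "r 1 > 0" using r_pos N2 by auto
  moreover have "dist a b > 0" using ab by simp
  ultimately show ?thesis unfolding c0_def using d0(1) eta_pos by auto
qed

lemma pw_le1: "0 \<le> x \<Longrightarrow> x \<le> 1 \<Longrightarrow> x powr (1/s) \<le> 1"
  using s_pos by (simp add: powr_le1)

lemma le_c0: "c0 \<le> d \<Longrightarrow> 0 \<le> x \<Longrightarrow> x \<le> 1 \<Longrightarrow> c0 * x powr (1/s) \<le> d"
proof -
  assume "c0 \<le> d" "0 \<le> x" "x \<le> 1"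
  then have "c0 * x powr (1/s) \<le> c0 * 1" using c0_pos pw_le1 by (intro mult_left_mono) auto
  then show ?thesis using \<open>c0 \<le> d\<close> by linarith
qed

lemma lower_b: "x \<in> {0..1} \<Longrightarrow> c0 * (1 - x) powr (1/s) \<le> dist (\<phi> x) b"
proof (cases "x = 1")
  case True then show ?thesis by simp
next
  case False
  assume x: "x \<in> {0..1}"
  have N: "N \<in> {1..N}" using N2 by auto
  show ?thesis
  proof (rule descent_b[where Q="\<lambda>x. c0 * (1 - x) powr (1/s) \<le> dist (\<phi> x) b"])
    fix y :: real assume y: "0 \<le> y" "y < 1" and Q: "c0 * (1 - y) powr (1/s) \<le> dist (\<phi> y) b"
    obtain y' where "y' \<in> {0..1}" "sm N y = sm N y'" "tt N - sm N y = lam N * (1 - y')"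
      using piece_pre[OF N, of "sm N y"] sm_range[OF N, of y] y by auto
    then have d: "1 - sm N y = lam N * (1 - y)" using sm_inj[OF N] ttN by auto
    have "c0 * (1 - sm N y) powr (1/s) = c0 * (lam N * (1 - y)) powr (1/s)" using d by simp
    also have "\<dots> = r N * (c0 * (1 - y) powr (1/s))" using powr_scale[OF N, of "1 - y"] y by simp
    also have "\<dots> \<le> r N * dist (\<phi> y) b" using Q r_pos[OF N] by simp
    also have "\<dots> = dist (\<phi> (sm N y)) (\<phi> (sm N 1))" using phi_scale[OF N, of y 1] y phi1 by simp
    also have "\<dots> = dist (\<phi> (sm N y)) b" using sm1[OF N] ttN phi1 by simp
    finally show "c0 * (1 - sm N y) powr (1/s) \<le> dist (\<phi> (sm N y)) b" .
  next
    fix y :: real assume y: "0 \<le> y" "y < tt (N-1)"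
    have y1: "y \<le> 1" using y tt_le1[of "N-1"] by auto
    obtain j where j: "j \<in> {1..N}" "y \<in> piece j" using cover1[of y] y y1 by auto
    have jN: "j \<noteq> N" using j y by auto
    have "c0 \<le> dist (\<phi> y) b"
    proof (cases "Suc j < N")
      case True
      have "\<phi> y \<in> S j ` \<gamma>" using phi_piece[OF j(1,2)] .
      moreover have "b \<in> S N ` \<gamma>" using phi_piece[OF N, of 1] phi1 ttN tt_le1[of "N-1"] by auto
      ultimately have "\<delta>0 \<le> dist (\<phi> y) b" using d0(2)[OF j(1) N True] by blast
      then show ?thesis unfolding c0_def by linarith
    next
      case False
      then have jj: "j = N - 1" using j jN by auto
      have i: "N - 1 \<in> {1..N-1}" using N2 by auto
      have v: "1 \<in> piece (Suc (N-1))" using N2 ttN tt_le1[of "N-1"] by auto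
      have "dist (\<phi> (tt (N-1))) (\<phi> 1) \<le> H * dist (\<phi> y) (\<phi> 1)" using btw_bt(2)[OF i _ v] j jj by auto
      moreover have "\<phi> (tt (N-1)) = S N a" using phi_tt'[OF N] .
      moreover have "dist (S N a) (S N b) = r N * dist a b" using S_sim[OF N] .
      ultimately have "r N * dist a b \<le> H * dist (\<phi> y) b" using phi1 path_b by simp
      then have "r N * dist a b / H \<le> dist (\<phi> y) b" using eta_pos by (simp add: divide_le_eq mult.commute)
      then show ?thesis unfolding c0_def by linarith
    qed
    then show "c0 * (1 - y) powr (1/s) \<le> dist (\<phi> y) b" using y y1 by (intro le_c0) auto
  qed (use x False in auto)
qed

lemma lower_a: "x \<in> {0..1} \<Longrightarrow> c0 * x powr (1/s) \<le> dist (\<phi> x) a"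
proof (cases "x = 0")
  case True then show ?thesis by simp
next
  case False
  assume x: "x \<in> {0..1}"
  have one: "1 \<in> {1..N}" using N2 by auto
  show ?thesis
  proof (rule descent_a[where Q="\<lambda>x. c0 * x powr (1/s) \<le> dist (\<phi> x) a"])
    fix y :: real assume y: "0 < y" "y \<le> 1" and Q: "c0 * y powr (1/s) \<le> dist (\<phi> y) a"
    have d: "sm 1 y = lam 1 * y" using sm_eq[of 1 y] tt0 by simp
    have "c0 * (sm 1 y) powr (1/s) = r 1 * (c0 * y powr (1/s))" using powr_scale[OF one, of y] y d by simp
    also have "\<dots> \<le> r 1 * dist (\<phi> y) a" using Q r_pos[OF one] by simp
    also have "\<dots> = dist (\<phi> (sm 1 y)) (\<phi> (sm 1 0))" using phi_scale[OF one, of y 0] y phi0 by simp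
    also have "\<dots> = dist (\<phi> (sm 1 y)) a" using sm0[OF one] tt0 phi0 by simp
    finally show "c0 * (sm 1 y) powr (1/s) \<le> dist (\<phi> (sm 1 y)) a" .
  next
    fix y :: real assume y: "tt 1 < y" "y \<le> 1"
    have y0: "0 \<le> y" using y tt_ge0[of 1] by auto
    obtain j where j: "j \<in> {1..N}" "y \<in> piece j" using cover1[of y] y y0 by auto
    have j1: "j \<noteq> 1" using j y by auto
    have "c0 \<le> dist (\<phi> y) a"
    proof (cases "Suc 1 < j")
      case True
      have "\<phi> y \<in> S j ` \<gamma>" using phi_piece[OF j(1,2)] .
      moreover have "a \<in> S 1 ` \<gamma>" using phi_piece[OF one, of 0] phi0 tt0 tt_ge0[of 1] by auto
      ultimately have "\<delta>0 \<le> dist a (\<phi> y)" using d0(2)[OF one j(1) True] by blast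
      then show ?thesis unfolding c0_def by (simp add: dist_commute)
    next
      case False
      then have jj: "j = Suc 1" using j j1 by auto
      have i: "1 \<in> {1..N-1}" using N2 by auto
      have u: "0 \<in> piece 1" using tt0 tt_ge0[of 1] by auto
      have "dist (\<phi> (tt 1)) (\<phi> 0) \<le> H * dist (\<phi> y) (\<phi> 0)" using btw_bt(1)[OF i u] j jj by auto
      moreover have "\<phi> (tt 1) = S 1 b" using phi_tt[OF one] .
      moreover have "dist (S 1 b) (S 1 a) = r 1 * dist a b" using S_sim[OF one] by (simp add: dist_commute)
      ultimately have "r 1 * dist a b \<le> H * dist (\<phi> y) a" using phi0 path_a by simp
      then have "r 1 * dist a b / H \<le> dist (\<phi> y) a" using eta_pos by (simp add: divide_le_eq mult.commute)
      then show ?thesis unfolding c0_def by linarith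
    qed
    then show "c0 * y powr (1/s) \<le> dist (\<phi> y) a" using y y0 by (intro le_c0) auto
  qed (use x False in auto)
qed

lemma lower_left: "i \<in> {1..N} \<Longrightarrow> u \<in> piece i \<Longrightarrow> c0 * (tt i - u) powr (1/s) \<le> dist (\<phi> u) (\<phi> (tt i))"
proof -
  assume i: "i \<in> {1..N}" and u: "u \<in> piece i"
  obtain u' where u': "u' \<in> {0..1}" "dist (\<phi> u) (\<phi> (tt i)) = r i * dist (\<phi> u') b" "tt i - u = lam i * (1 - u')"
    using left_scale[OF i u] by blast
  have "c0 * (tt i - u) powr (1/s) = r i * (c0 * (1 - u') powr (1/s))" using powr_scale[OF i, of "1-u'"] u' by simp
  also have "\<dots> \<le> r i * dist (\<phi> u') b" using lower_b[OF u'(1)] r_pos[OF i] by simp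
  finally show ?thesis using u' by simp
qed

lemma lower_right: "i \<in> {1..N} \<Longrightarrow> v \<in> piece i \<Longrightarrow> c0 * (v - tt (i-1)) powr (1/s) \<le> dist (\<phi> (tt (i-1))) (\<phi> v)"
proof -
  assume i: "i \<in> {1..N}" and v: "v \<in> piece i"
  obtain v' where v': "v' \<in> {0..1}" "dist (\<phi> (tt (i-1))) (\<phi> v) = r i * dist (\<phi> v') a" "v - tt (i-1) = lam i * v'"
    using right_scale[OF i v] by blast
  have "c0 * (v - tt (i-1)) powr (1/s) = r i * (c0 * v' powr (1/s))" using powr_scale[OF i, of "v'"] v' by simp
  also have "\<dots> \<le> r i * dist (\<phi> v') a" using lower_a[OF v'(1)] r_pos[OF i] by simp
  finally show ?thesis using v' by simp
qed

definition "c1 = min \<delta>0 (c0 / H * (1/2) powr (1/s))"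
lemma c1_pos: "c1 > 0" unfolding c1_def using d0(1) c0_pos eta_pos by auto

lemma lower_lt: "0 \<le> u \<Longrightarrow> u < v \<Longrightarrow> v \<le> 1 \<Longrightarrow> c1 * (v - u) powr (1/s) \<le> dist (\<phi> u) (\<phi> v)"
proof (rule descent[where Q="\<lambda>u v. c1 * (v - u) powr (1/s) \<le> dist (\<phi> u) (\<phi> v)"])
  fix i u v assume i: "i \<in> {1..N}" and uv: "0 \<le> u" "u < v" "v \<le> 1"
    and Q: "c1 * (v - u) powr (1/s) \<le> dist (\<phi> u) (\<phi> v)"
  have "c1 * (sm i v - sm i u) powr (1/s) = c1 * (lam i * (v - u)) powr (1/s)" using sm_diff[OF i, of v u] by simp
  also have "\<dots> = r i * (c1 * (v - u) powr (1/s))" using powr_scale[OF i, of "v - u"] uv by simp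
  also have "\<dots> \<le> r i * dist (\<phi> u) (\<phi> v)" using Q r_pos[OF i] by simp
  also have "\<dots> = dist (\<phi> (sm i u)) (\<phi> (sm i v))" using phi_scale[OF i, of u v] uv by simp
  finally show "c1 * (sm i v - sm i u) powr (1/s) \<le> dist (\<phi> (sm i u)) (\<phi> (sm i v))" .
next
  fix u v assume uv: "0 \<le> u" "u < v" "v \<le> 1" and np: "\<not> (\<exists>i\<in>{1..N}. u \<in> piece i \<and> v \<in> piece i)"
  from split_pieces[OF uv np] show "c1 * (v - u) powr (1/s) \<le> dist (\<phi> u) (\<phi> v)"
  proof
    assume "\<exists>i. i \<in> {1..N-1} \<and> u \<in> piece i \<and> v \<in> piece (Suc i)"
    then obtain i where i: "i \<in> {1..N-1}" "u \<in> piece i" "v \<in> piece (Suc i)" by blast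
    have i1: "i \<in> {1..N}" and i2: "Suc i \<in> {1..N}" using i by auto
    let ?D = "dist (\<phi> u) (\<phi> v)"
    have L: "c0 * (tt i - u) powr (1/s) \<le> H * ?D"
      using lower_left[OF i1 i(2)] btw_bt(1)[OF i] by (simp add: dist_commute)
    have R: "c0 * (v - tt i) powr (1/s) \<le> H * ?D"
      using lower_right[OF i2 i(3)] btw_bt(2)[OF i] by simp
    have "c0 * ((v - u) / 2) powr (1/s) \<le> H * ?D"
    proof (cases "tt i - u \<ge> (v - u) / 2")
      case True
      then have "c0 * ((v - u) / 2) powr (1/s) \<le> c0 * (tt i - u) powr (1/s)"
        using uv c0_pos s_pos by (intro mult_left_mono powr_mono2) auto
      then show ?thesis using L by linarith
    next
      case False
      then have "c0 * ((v - u) / 2) powr (1/s) \<le> c0 * (v - tt i) powr (1/s)"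
        using uv c0_pos s_pos by (intro mult_left_mono powr_mono2) auto
      then show ?thesis using R by linarith
    qed
    moreover have "((v - u) / 2) powr (1/s) = (1/2) powr (1/s) * (v - u) powr (1/s)"
      using uv by (simp add: powr_mult[symmetric] powr_divide)
    ultimately have "c0 * (1/2) powr (1/s) * (v - u) powr (1/s) \<le> H * ?D" by (simp add: mult.assoc)
    then have "c0 / H * (1/2) powr (1/s) * (v - u) powr (1/s) \<le> ?D"
      using eta_pos by (simp add: field_simps)
    moreover have "c1 * (v - u) powr (1/s) \<le> c0 / H * (1/2) powr (1/s) * (v - u) powr (1/s)"
      unfolding c1_def by (intro mult_right_mono) auto
    ultimately show ?thesis by linarith
  next
    assume "\<exists>i j. i \<in> {1..N} \<and> j \<in> {1..N} \<and> Suc i < j \<and> u \<in> piece i \<and> v \<in> piece j"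
    then obtain i j where ij: "i \<in> {1..N}" "j \<in> {1..N}" "Suc i < j" "u \<in> piece i" "v \<in> piece j" by blast
    have "\<delta>0 \<le> dist (\<phi> u) (\<phi> v)" using d0(2)[OF ij(1-3) phi_piece[OF ij(1,4)] phi_piece[OF ij(2,5)]] .
    moreover have "c1 * (v - u) powr (1/s) \<le> c1 * 1" using c1_pos pw_le1[of "v - u"] uv by (intro mult_left_mono) auto
    moreover have "c1 \<le> \<delta>0" unfolding c1_def by simp
    ultimately show ?thesis by linarith
  qed
qed

lemma lower: "u \<in> {0..1} \<Longrightarrow> v \<in> {0..1} \<Longrightarrow> c1 * \<bar>u - v\<bar> powr (1/s) \<le> dist (\<phi> u) (\<phi> v)"
proof -
  assume u: "u \<in> {0..1}" and v: "v \<in> {0..1}"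
  consider "u < v" | "u = v" | "v < u" by linarith
  then show ?thesis
  proof cases
    case 1 then show ?thesis using lower_lt[of u v] u v by auto
  next
    case 2 then show ?thesis by simp
  next
    case 3 then show ?thesis using lower_lt[of v u] u v by (auto simp: dist_commute)
  qed
qed

end



context hifs begin

lemma S_a_fix: "a = b \<Longrightarrow> i \<in> {1..N} \<Longrightarrow> S i a = a"
proof -
  assume ab: "a = b" and i: "i \<in> {1..N}"
  have "1 \<le> i \<Longrightarrow> i \<le> N \<Longrightarrow> S i a = a" for i
  proof (induction i rule: dec_induct)
    case base then show ?case using path_a by simp
  next
    case (step n)
    then have "n \<in> {1..N-1}" by auto
    then have "S (Suc n) a = S n b" using path_mid by simp
    then show ?case using step ab by simp
  qed
  then show ?thesis using i by auto
qed

lemma gam_single: "a = b \<Longrightarrow> \<gamma> \<subseteq> {a}"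
proof -
  assume ab: "a = b"
  have "continuous_on \<gamma> (\<lambda>x. dist x a)" by (intro continuous_intros)
  from continuous_attains_sup[OF gam_compact gam_ne this]
  obtain x0 where x0: "x0 \<in> \<gamma>" "\<forall>y\<in>\<gamma>. dist y a \<le> dist x0 a" by blast
  obtain i y where i: "i \<in> {1..N}" and y: "y \<in> \<gamma>" and xy: "x0 = S i y"
  proof -
    from x0(1) have "x0 \<in> (\<Union>i\<in>{1..N}. S i ` \<gamma>)" using gam_eq by blast
    then show ?thesis using that by blast
  qed
  have "dist x0 a = dist (S i y) (S i a)" using xy S_a_fix[OF ab i] by simp
  also have "\<dots> = r i * dist y a" using S_sim[OF i] .
  also have "\<dots> \<le> r i * dist x0 a" using x0(2) y r_pos[OF i] by (intro mult_left_mono) auto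
  finally have "(1 - r i) * dist x0 a \<le> 0" by (simp add: algebra_simps)
  moreover have "1 - r i > 0" using r_lt1[OF i] by simp
  ultimately have "dist x0 a \<le> 0" by (simp add: mult_le_0_iff)
  then have "\<forall>y\<in>\<gamma>. dist y a \<le> 0" using x0(2) by fastforce
  then show ?thesis by auto
qed

end

theorem theorem1p5:
  fixes S :: "nat \<Rightarrow> 'a::euclidean_space \<Rightarrow> 'a" and r :: "nat \<Rightarrow> real"
    and N :: nat and \<gamma> :: "'a set" and a b :: 'a and s :: real and \<phi> :: "real \<Rightarrow> 'a"
  assumes "contracting_ifs N S r"
    and "invariant_set N S \<gamma>"
    and "ifs_arc N S \<gamma> a b"
    and "similarity_dimension N r s"
    and "hutchinson_parameterization N S r s a b \<phi>"
  shows "quasiarc \<gamma> \<longleftrightarrow>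
    (\<exists>K\<ge>1. \<forall>u\<in>{0..1}. \<forall>v\<in>{0..1}.
        inverse K * \<bar>u - v\<bar> powr (1 / s) \<le> dist (\<phi> u) (\<phi> v) \<and>
        dist (\<phi> u) (\<phi> v) \<le> K * \<bar>u - v\<bar> powr (1 / s))"
proof -
  interpret hifs S r N \<gamma> a b s \<phi> using assms by unfold_locales
  show ?thesis
  proof
    assume "quasiarc \<gamma>"
    then obtain f :: "real \<Rightarrow> 'a" where q: "quasisymmetric_on {0..1} f" and fim: "f ` {0..1} = \<gamma>"
      unfolding quasiarc_def by blast
    obtain \<eta> where fc: "continuous_on {0..1} f" and fi: "inj_on f {0..1}"
      and em: "strict_mono_on {0..} \<eta>" and e0: "\<eta> 0 = 0"
      and qs: "\<forall>x\<in>{0..1}. \<forall>y\<in>{0..1}. \<forall>z\<in>{0..1}. \<forall>t\<ge>0. dist x z \<le> t * dist y z \<longrightarrow>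
            dist (f x) (f z) \<le> \<eta> t * dist (f y) (f z)"
      using q unfolding quasisymmetric_on_def by blast
    have ep: "\<eta> 1 > 0" using em e0 unfolding strict_mono_on_def by (metis atLeast_iff order_refl zero_le_one zero_less_one)
    have ab: "a \<noteq> b"
    proof
      assume ab: "a = b"
      have "f 0 \<in> \<gamma>" "f 1 \<in> \<gamma>" using fim by auto
      then have "f 0 = f 1" using gam_single[OF ab] by auto
      then show False using fi unfolding inj_on_def by fastforce
    qed
    interpret hifs_qa S r N \<gamma> a b s \<phi> f \<eta>
      by unfold_locales (use fc fi fim qs ep ab in auto)
    define K where "K = max KU (1 / c1)"
    have K1: "K \<ge> 1" unfolding K_def KU_def by auto
    have Kc: "inverse K \<le> c1"
    proof -
      have "1 / c1 \<le> K" unfolding K_def by auto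
      then have "inverse K \<le> inverse (1 / c1)" using c1_pos by (intro le_imp_inverse_le) auto
      then show ?thesis by simp
    qed
    show "\<exists>K\<ge>1. \<forall>u\<in>{0..1}. \<forall>v\<in>{0..1}.
        inverse K * \<bar>u - v\<bar> powr (1 / s) \<le> dist (\<phi> u) (\<phi> v) \<and>
        dist (\<phi> u) (\<phi> v) \<le> K * \<bar>u - v\<bar> powr (1 / s)"
    proof (intro exI[of _ K] conjI ballI K1)
      fix u v :: real assume u: "u \<in> {0..1}" and v: "v \<in> {0..1}"
      have "inverse K * \<bar>u - v\<bar> powr (1 / s) \<le> c1 * \<bar>u - v\<bar> powr (1 / s)"
        using Kc by (intro mult_right_mono) auto
      then show "inverse K * \<bar>u - v\<bar> powr (1 / s) \<le> dist (\<phi> u) (\<phi> v)" using lower[OF u v] by linarith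
      have "KU * \<bar>u - v\<bar> powr (1 / s) \<le> K * \<bar>u - v\<bar> powr (1 / s)"
        unfolding K_def by (intro mult_right_mono) auto
      then show "dist (\<phi> u) (\<phi> v) \<le> K * \<bar>u - v\<bar> powr (1 / s)" using upper[OF u v] by linarith
    qed
  next
    assume "\<exists>K\<ge>1. \<forall>u\<in>{0..1}. \<forall>v\<in>{0..1}.
        inverse K * \<bar>u - v\<bar> powr (1 / s) \<le> dist (\<phi> u) (\<phi> v) \<and>
        dist (\<phi> u) (\<phi> v) \<le> K * \<bar>u - v\<bar> powr (1 / s)"
    then obtain K where K1: "K \<ge> 1" and
      lo: "\<And>u v. u \<in> {0..1} \<Longrightarrow> v \<in> {0..1} \<Longrightarrow> inverse K * \<bar>u - v\<bar> powr (1 / s) \<le> dist (\<phi> u) (\<phi> v)" and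
      hi: "\<And>u v. u \<in> {0..1} \<Longrightarrow> v \<in> {0..1} \<Longrightarrow> dist (\<phi> u) (\<phi> v) \<le> K * \<bar>u - v\<bar> powr (1 / s)"
      by blast
    have lo': "\<bar>u - v\<bar> powr (1 / s) \<le> K * dist (\<phi> u) (\<phi> v)" if "u \<in> {0..1}" "v \<in> {0..1}" for u v
      using lo[OF that] K1 by (simp add: field_simps)
    define \<eta> where "\<eta> t = (K * K) * t powr (1/s)" for t :: real
    have Kp: "K * K > 0" using K1 by simp
    have inj: "inj_on \<phi> {0..1}"
    proof (rule inj_onI)
      fix u v :: real assume u: "u \<in> {0..1}" and v: "v \<in> {0..1}" and e: "\<phi> u = \<phi> v"
      have "\<bar>u - v\<bar> powr (1 / s) \<le> 0" using lo'[OF u v] e by simp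
      then show "u = v" by (metis abs_eq_0 eq_iff_diff_eq_0 powr_eq_0_iff powr_ge_zero order_antisym)
    qed
    have qs: "quasisymmetric_on {0..1} \<phi>"
      unfolding quasisymmetric_on_def
    proof (intro conjI phi_cont inj exI[of _ \<eta>])
      show "continuous_on {0..} \<eta>" unfolding \<eta>_def
        using s_pos by (intro continuous_intros continuous_on_powr') auto
      show "strict_mono_on {0..} \<eta>" unfolding strict_mono_on_def \<eta>_def
        using Kp s_pos by (auto intro!: mult_strict_left_mono powr_less_mono2)
      show "\<eta> 0 = 0" unfolding \<eta>_def by simp
      show "\<eta> ` {0..} = {0..}"
      proof
        show "\<eta> ` {0..} \<subseteq> {0..}" unfolding \<eta>_def using Kp by auto
        show "{0..} \<subseteq> \<eta> ` {0..}"
        proof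
          fix y :: real assume y: "y \<in> {0..}"
          have "\<eta> ((y / (K * K)) powr s) = y"
            unfolding \<eta>_def using y Kp s_pos K1 by (simp add: powr_powr)
          then show "y \<in> \<eta> ` {0..}" by (metis atLeast_iff image_eqI powr_ge_zero)
        qed
      qed
      show "\<forall>x\<in>{0..1}. \<forall>y\<in>{0..1}. \<forall>z\<in>{0..1}. \<forall>t\<ge>0. dist x z \<le> t * dist y z \<longrightarrow>
            dist (\<phi> x) (\<phi> z) \<le> \<eta> t * dist (\<phi> y) (\<phi> z)"
      proof (intro ballI allI impI)
        fix x y z t :: real assume x: "x \<in> {0..1}" and y: "y \<in> {0..1}" and z: "z \<in> {0..1}"
          and t: "t \<ge> 0" and d: "dist x z \<le> t * dist y z"
        have "dist (\<phi> x) (\<phi> z) \<le> K * \<bar>x - z\<bar> powr (1 / s)" using hi[OF x z] .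
        also have "\<bar>x - z\<bar> powr (1 / s) \<le> (t * \<bar>y - z\<bar>) powr (1 / s)"
          using d s_pos t by (intro powr_mono2) (auto simp: dist_real_def)
        also have "(t * \<bar>y - z\<bar>) powr (1 / s) = t powr (1/s) * \<bar>y - z\<bar> powr (1 / s)"
          using t by (simp add: powr_mult)
        also have "\<bar>y - z\<bar> powr (1 / s) \<le> K * dist (\<phi> y) (\<phi> z)" using lo'[OF y z] .
        finally have "dist (\<phi> x) (\<phi> z) \<le> K * (t powr (1/s) * (K * dist (\<phi> y) (\<phi> z)))"
          using K1 by (simp add: mult_left_mono)
        then show "dist (\<phi> x) (\<phi> z) \<le> \<eta> t * dist (\<phi> y) (\<phi> z)" unfolding \<eta>_def by (simp add: algebra_simps)
      qed
    qed
    show "quasiarc \<gamma>" unfolding quasiarc_def using qs phi_image by blast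
  qed
qed


end
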